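(* Let $f:\{0,1\}^n\to\{\pm1\}$ be $k$-monotone. Let $t$ be an integer with $1<t\le n$, and let $d\ge 1$ be an integer and $\epsilon>0$ such that $d\epsilon\ge 2kn/t$. Then $f$ is $(t,d,\epsilon)$-concentrated, i.e., there exists an integer $r$ with $n/2-t/2\le r\le n/2+t/2$ such that $\mathbf{W}^{>d}(f|_r)<\epsilon$.
   Context: A function $g:\{0,1\}^n\to\{0,1\}$ is monotone if $x\preceq y$ coordinatewise implies $g(x)\le g(y)$; $g$ is $k$-monotone if it is the XOR of $k$ monotone functions. A function $f:\{0,1\}^n\to\{\pm1\}$ is $k$-monotone if $(1-f)/2$ is $k$-monotone (i.e. the value $0$ is identified with $1$ and the value $1$ with $-1$). Slices: for $0\le r\le n$, $\binom{[n]}{r}=\{x\in\{0,1\}^n:\sum_i x_i=r\}$ with the uniform distribution; $f|_r$ denotes the restriction of $f$ to this slice; $\langle g,h\rangle=\mathbb{E}_{x}[g(x)h(x)]$ ($x$ uniform on the slice), $\|g\|_2^2=\langle g,g\rangle$. Young–Fourier basis: for $d\le n/2$, a sequence of length $d$ is a sequence $s_1,\dots,s_d$ of distinct elements of $[n]$. For disjoint sequences $A=(a_i),B=(b_i)$ of length $d$, $\chi_{A,B}(x)=\prod_{i=1}^d(x_{a_i}-x_{b_i})$, and $A<B$ means $a_i<b_i$ for all $i$. A top set of length $d$ is an increasing sequence $B$ for which some disjoint sequence $A$ of length $d$ satisfies $A<B$; $\mathcal{B}_{n,d}$ is the set of top sets of length $d$. Set $\chi_B=\sum_{A:\,A<B}\chi_{A,B}$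 (sum over sequences $A$ of length $d$ disjoint from $B$ with $A<B$). For $r\le n/2$, $\{\chi_B: B\in\mathcal{B}_{n,d},d\le r\}$ is an orthogonal basis of real functions on $\binom{[n]}{r}$; for $r>n/2$ one uses $\chi_{\bar B}(x):=\chi_B(\bar x)$ ($\bar x$ = bitwise complement), $B\in\mathcal B_{n,d}$, $d\le n-r$. For $g$ on the slice, $\hat g(B)=\langle g,\chi_B\rangle/\|\chi_B\|_2^2$ (resp. with $\chi_{\bar B}$ when $r>n/2$), so $g=\sum_B\hat g(B)\chi_B$ (resp. $\chi_{\bar B}$). Level weights: $\mathbf W^{d}(g)=\sum_{B\in\mathcal B_{n,d}}\hat g(B)^2\|\chi_B\|_2^2$, $\mathbf W^{>d}(g)=\sum_{d'>d}\mathbf W^{d'}(g)$, $\mathbf W^{\le d}(g)=\sum_{d'\le d}\mathbf W^{d'}(g)$. $f:\{0,1\}^n\to\{\pm1\}$ is $(t,d,\epsilon)$-concentrated if for some integer $r$ with $n/2-t/2\le r\le n/2+t/2$, $\mathbf W^{>d}(f|_r)<\epsilon$. *)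

theory Defs
  imports Complex_Main
begin

text \<open>Points of the cube {0,1}^n are represented by their supports: subsets of [n] = {1..n};
  coordinate x_i is 1 iff i is in x.\<close>

definition cube :: "nat \<Rightarrow> nat set set" where
  "cube n = Pow {1..n}"

definition monotone_bool :: "nat \<Rightarrow> (nat set \<Rightarrow> nat) \<Rightarrow> bool" where
  "monotone_bool n g \<longleftrightarrow> (\<forall>x\<in>cube n. g x \<in> {0,1}) \<and>
     (\<forall>x\<in>cube n. \<forall>y\<in>cube n. x \<subseteq> y \<longrightarrow> g x \<le> g y)"

definition k_monotone_bool :: "nat \<Rightarrow> nat \<Rightarrow> (nat set \<Rightarrow> nat) \<Rightarrow> bool" where
  "k_monotone_bool n k g \<longleftrightarrow> (\<exists>G :: nat \<Rightarrow> nat set \<Rightarrow> nat.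
     (\<forall>i<k. monotone_bool n (G i)) \<and>
     (\<forall>x\<in>cube n. g x = (\<Sum>i<k. G i x) mod 2))"

definition k_monotone_pm :: "nat \<Rightarrow> nat \<Rightarrow> (nat set \<Rightarrow> real) \<Rightarrow> bool" where
  "k_monotone_pm n k f \<longleftrightarrow> (\<forall>x\<in>cube n. f x \<in> {-1,1}) \<and>
     (\<exists>g. k_monotone_bool n k g \<and> (\<forall>x\<in>cube n. real (g x) = (1 - f x) / 2))"

definition slice :: "nat \<Rightarrow> nat \<Rightarrow> nat set set" where
  "slice n r = {x. x \<subseteq> {1..n} \<and> card x = r}"

definition slice_ip :: "nat \<Rightarrow> nat \<Rightarrow> (nat set \<Rightarrow> real) \<Rightarrow> (nat set \<Rightarrow> real) \<Rightarrow> real" where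
  "slice_ip n r g h = (\<Sum>x\<in>slice n r. g x * h x) / real (card (slice n r))"

definition seqs :: "nat \<Rightarrow> nat \<Rightarrow> nat list set" where
  "seqs n d = {s. length s = d \<and> distinct s \<and> set s \<subseteq> {1..n}}"

definition chiAB :: "nat list \<Rightarrow> nat list \<Rightarrow> nat set \<Rightarrow> real" where
  "chiAB A B x = (\<Prod>i<length B. (of_bool (A ! i \<in> x) - of_bool (B ! i \<in> x)))"

definition seq_less :: "nat list \<Rightarrow> nat list \<Rightarrow> bool" where
  "seq_less A B \<longleftrightarrow> length A = length B \<and> (\<forall>i<length A. A ! i < B ! i)"

definition below_seqs :: "nat \<Rightarrow> nat list \<Rightarrow> nat list set" where
  "below_seqs n B = {A \<in> seqs n (length B). set A \<inter> set B = {} \<and> seq_less A B}"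

definition top_sets :: "nat \<Rightarrow> nat \<Rightarrow> nat list set" where
  "top_sets n d = {B \<in> seqs n d. sorted_wrt (<) B \<and> below_seqs n B \<noteq> {}}"

definition chi :: "nat \<Rightarrow> nat list \<Rightarrow> nat set \<Rightarrow> real" where
  "chi n B x = (\<Sum>A\<in>below_seqs n B. chiAB A B x)"

definition slice_basis :: "nat \<Rightarrow> nat \<Rightarrow> nat list \<Rightarrow> nat set \<Rightarrow> real" where
  "slice_basis n r B x = (if 2 * r \<le> n then chi n B x else chi n B ({1..n} - x))"

definition fourier_coeff :: "nat \<Rightarrow> nat \<Rightarrow> (nat set \<Rightarrow> real) \<Rightarrow> nat list \<Rightarrow> real" where
  "fourier_coeff n r g B =
     slice_ip n r g (slice_basis n r B) / slice_ip n r (slice_basis n r B) (slice_basis n r B)"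

definition level_weight :: "nat \<Rightarrow> nat \<Rightarrow> (nat set \<Rightarrow> real) \<Rightarrow> nat \<Rightarrow> real" where
  "level_weight n r g d = (\<Sum>B\<in>top_sets n d.
      (fourier_coeff n r g B)\<^sup>2 * slice_ip n r (slice_basis n r B) (slice_basis n r B))"

definition weight_gt :: "nat \<Rightarrow> nat \<Rightarrow> (nat set \<Rightarrow> real) \<Rightarrow> nat \<Rightarrow> real" where
  "weight_gt n r g d = (\<Sum>d'\<in>{d<..min r (n - r)}. level_weight n r g d')"

definition concentrated :: "nat \<Rightarrow> (nat set \<Rightarrow> real) \<Rightarrow> nat \<Rightarrow> nat \<Rightarrow> real \<Rightarrow> bool" where
  "concentrated n f t d \<epsilon> \<longleftrightarrow> (\<exists>r::int. real n / 2 - real t / 2 \<le> r \<and> r \<le> real n / 2 + real t / 2 \<and>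
      0 \<le> r \<and> r \<le> n \<and> weight_gt n (nat r) f d < \<epsilon>)"

end

theory Submission imports Defs begin

definition tr :: "nat \<Rightarrow> nat \<Rightarrow> nat \<Rightarrow> nat" where
  "tr u v w = (if w = u then v else if w = v then u else w)"

definition sw :: "nat \<Rightarrow> nat \<Rightarrow> nat set \<Rightarrow> nat set" where
  "sw u v x = {w. tr u v w \<in> x}"

abbreviation ind :: "nat \<Rightarrow> nat set \<Rightarrow> real" where
  "ind a x \<equiv> of_bool (a \<in> x)"

lemma mem_sw[simp]: "w \<in> sw u v x \<longleftrightarrow> tr u v w \<in> x"
  by (simp add: sw_def)

lemma tr_tr[simp]: "tr u v (tr u v w) = w"
  by (simp add: tr_def)

lemma sw_sw[simp]: "sw u v (sw u v x) = x"
  by (auto simp: sw_def)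

lemma sw_comm: "sw u v = sw v u"
  by (auto simp: sw_def tr_def fun_eq_iff)

lemma tr_other[simp]: "w \<noteq> u \<Longrightarrow> w \<noteq> v \<Longrightarrow> tr u v w = w"
  by (simp add: tr_def)
lemma tr_u[simp]: "tr u v u = v" by (simp add: tr_def)
lemma tr_v[simp]: "tr u v v = u" by (simp add: tr_def)

definition Lop :: "nat set \<Rightarrow> (nat set \<Rightarrow> real) \<Rightarrow> nat set \<Rightarrow> real" where
  "Lop M g x = (\<Sum>u\<in>M. \<Sum>v\<in>M. g x - g (sw u v x))"

definition pprod :: "(nat \<times> nat) list \<Rightarrow> nat set \<Rightarrow> real" where
  "pprod ps x = prod_list (map (\<lambda>(a,b). ind a x - ind b x) ps)"

definition supp :: "(nat \<times> nat) list \<Rightarrow> nat set" where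
  "supp ps = set (map fst ps) \<union> set (map snd ps)"

definition okp :: "(nat \<times> nat) list \<Rightarrow> bool" where
  "okp ps \<longleftrightarrow> distinct (map fst ps) \<and> distinct (map snd ps) \<and> set (map fst ps) \<inter> set (map snd ps) = {}"

lemma pprod_Nil[simp]: "pprod [] x = 1" by (simp add: pprod_def)
lemma pprod_Cons[simp]: "pprod ((a,b)#ps) x = (ind a x - ind b x) * pprod ps x"
  by (simp add: pprod_def)
lemma supp_Cons[simp]: "supp ((a,b)#ps) = insert a (insert b (supp ps))"
  by (auto simp: supp_def)
lemma supp_Nil[simp]: "supp [] = {}" by (simp add: supp_def)
lemma okp_Cons[simp]: "okp ((a,b)#ps) \<longleftrightarrow> okp ps \<and> a \<noteq> b \<and> a \<notin> supp ps \<and> b \<notin> supp ps"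
  by (auto simp: okp_def supp_def)
lemma finite_supp[simp]: "finite (supp ps)" by (simp add: supp_def)
lemma card_supp: "okp ps \<Longrightarrow> card (supp ps) = 2 * length ps"
  by (induction ps) (auto simp: card_insert_if)

lemma pprod_cong: "(\<And>w. w \<in> supp ps \<Longrightarrow> (w \<in> y \<longleftrightarrow> w \<in> x)) \<Longrightarrow> pprod ps y = pprod ps x"
  by (induction ps) auto

lemma pprod_sw_out: "u \<notin> supp ps \<Longrightarrow> v \<notin> supp ps \<Longrightarrow> pprod ps (sw u v x) = pprod ps x"
  by (rule pprod_cong) (auto simp: tr_def)

lemma F_zero: "okp ps \<Longrightarrow> t \<notin> supp ps \<Longrightarrow>
   (\<Sum>v\<in>supp ps. (ind t x - ind v x) * pprod ps (sw t v x)) = 0"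
proof (induction ps)
  case Nil then show ?case by simp
next
  case (Cons p qs)
  obtain c d where p: "p = (c,d)" by fastforce
  have cd: "c \<noteq> d" "c \<notin> supp qs" "d \<notin> supp qs" "okp qs" using Cons.prems p by auto
  have t: "t \<noteq> c" "t \<noteq> d" "t \<notin> supp qs" using Cons.prems p by auto
  have s1: "pprod qs (sw t c x) = pprod qs x" by (rule pprod_sw_out) (use cd t in auto)
  have s2: "pprod qs (sw t d x) = pprod qs x" by (rule pprod_sw_out) (use cd t in auto)
  have s3: "(\<Sum>v\<in>supp qs. (ind t x - ind v x) * pprod ((c,d)#qs) (sw t v x))
      = (ind c x - ind d x) * (\<Sum>v\<in>supp qs. (ind t x - ind v x) * pprod qs (sw t v x))"
    unfolding sum_distrib_left
  proof (rule sum.cong[OF refl])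
    fix v assume v: "v \<in> supp qs"
    then have "v \<noteq> c" "v \<noteq> d" using cd by auto
    then show "(ind t x - ind v x) * pprod ((c, d) # qs) (sw t v x) =
          (ind c x - ind d x) * ((ind t x - ind v x) * pprod qs (sw t v x))"
      using t by (simp add: tr_def)
  qed
  have "(\<Sum>v\<in>supp ((c,d)#qs). (ind t x - ind v x) * pprod ((c,d)#qs) (sw t v x))
     = (ind t x - ind c x) * pprod ((c,d)#qs) (sw t c x) + ((ind t x - ind d x) * pprod ((c,d)#qs) (sw t d x)
       + (\<Sum>v\<in>supp qs. (ind t x - ind v x) * pprod ((c,d)#qs) (sw t v x)))"
    using cd by (simp add: sum.insert_if)
  also have "\<dots> = 0"
    using s1 s2 s3 Cons.IH[OF cd(4) t(3)] t cd by (simp add: tr_def algebra_simps)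
  finally show ?case using p by simp
qed


lemma sw_same[simp]: "sw u u x = x" by (auto simp: sw_def tr_def)

lemma L_pprod:
  assumes "finite M" "supp ps \<subseteq> M" "okp ps"
  shows "Lop M (pprod ps) x = 2 * real (length ps) * (real (card M) + 1 - real (length ps)) * pprod ps x"
  using assms
proof (induction ps)
  case Nil then show ?case by (simp add: Lop_def)
next
  case (Cons p qs)
  obtain a b where p: "p = (a,b)" by fastforce
  have ab: "a \<noteq> b" "a \<notin> supp qs" "b \<notin> supp qs" "okp qs" "a \<in> M" "b \<in> M" "supp qs \<subseteq> M"
    using Cons.prems p by auto
  define g where "g y = ind a y - ind b y" for y
  define h where "h = pprod qs"
  define F where "F u v = (g x - g (sw u v x)) * h (sw u v x)" for u v
  define M0 where "M0 = M - {a,b}"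
  define R where "R = M0 - supp qs"
  have fin: "finite M0" "finite R" using Cons.prems by (auto simp: M0_def R_def)
  have M: "M = insert a (insert b M0)" using ab by (auto simp: M0_def)
  have abM0: "a \<notin> M0" "b \<notin> M0" by (auto simp: M0_def)
  have IH: "Lop M h x = 2 * real (length qs) * (real (card M) + 1 - real (length qs)) * h x"
    unfolding h_def by (rule Cons.IH) (use Cons.prems ab in auto)
  have pp: "pprod (p#qs) y = g y * h y" for y by (simp add: p g_def h_def)
  have Fsym: "F u v = F v u" for u v by (simp add: F_def sw_comm)
  have F0: "F u v = 0" if "u \<in> M0" "v \<in> M0" for u v
  proof -
    have "u \<noteq> a" "u \<noteq> b" "v \<noteq> a" "v \<noteq> b" using that by (auto simp: M0_def)
    then show ?thesis by (simp add: F_def g_def tr_def)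
  qed
  have Faa: "F a a = 0" "F b b = 0" by (simp_all add: F_def)
  have hab: "h (sw a b x) = h x" unfolding h_def by (rule pprod_sw_out) (use ab in auto)
  have Fab: "F a b = 2 * g x * h x"
    using ab hab by (simp add: F_def g_def tr_def)
  have Fba: "F b a = 2 * g x * h x" using Fab Fsym by simp
  have Fav: "F a v = (ind a x - ind v x) * h (sw a v x)" if "v \<in> M0" for v
  proof -
    have "v \<noteq> a" "v \<noteq> b" using that by (auto simp: M0_def)
    then show ?thesis using ab by (simp add: F_def g_def tr_def)
  qed
  have Fbv: "F b v = (ind v x - ind b x) * h (sw b v x)" if "v \<in> M0" for v
  proof -
    have "v \<noteq> a" "v \<noteq> b" using that by (auto simp: M0_def)
    then show ?thesis using ab by (simp add: F_def g_def tr_def)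
  qed
  have inner_u: "(\<Sum>v\<in>M. F u v) = F a u + F b u" if "u \<in> M0" for u
  proof -
    have "(\<Sum>v\<in>M. F u v) = F u a + (F u b + (\<Sum>v\<in>M0. F u v))"
      using fin abM0 ab by (simp add: M)
    also have "(\<Sum>v\<in>M0. F u v) = 0" using F0 that by simp
    finally show ?thesis using Fsym by simp
  qed
  have sumA: "(\<Sum>v\<in>M. F a v) = 2 * g x * h x + (\<Sum>v\<in>M0. F a v)"
    using fin abM0 ab Faa Fab by (simp add: M)
  have sumB: "(\<Sum>v\<in>M. F b v) = 2 * g x * h x + (\<Sum>v\<in>M0. F b v)"
    using fin abM0 ab Faa Fba by (simp add: M)
  have T: "(\<Sum>u\<in>M. \<Sum>v\<in>M. F u v) = 4 * g x * h x + 2 * (\<Sum>v\<in>M0. F a v + F b v)"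
  proof -
    have "(\<Sum>u\<in>M. \<Sum>v\<in>M. F u v) = (\<Sum>v\<in>M. F a v) + ((\<Sum>v\<in>M. F b v) + (\<Sum>u\<in>M0. \<Sum>v\<in>M. F u v))"
      using fin abM0 ab by (simp add: M)
    also have "(\<Sum>u\<in>M0. \<Sum>v\<in>M. F u v) = (\<Sum>u\<in>M0. F a u + F b u)"
      using inner_u by (rule sum.cong[OF refl])
    finally show ?thesis using sumA sumB by (simp add: sum.distrib)
  qed
  have suppM0: "supp qs \<subseteq> M0" using ab by (auto simp: M0_def)
  have M0split: "M0 = supp qs \<union> R" using suppM0 by (auto simp: R_def)
  have Za: "(\<Sum>v\<in>supp qs. F a v) = 0"
  proof -
    have "(\<Sum>v\<in>supp qs. F a v) = (\<Sum>v\<in>supp qs. (ind a x - ind v x) * pprod qs (sw a v x))"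
      using Fav suppM0 by (auto simp: h_def intro!: sum.cong)
    also have "\<dots> = 0" by (rule F_zero) (use ab in auto)
    finally show ?thesis .
  qed
  have Zb: "(\<Sum>v\<in>supp qs. F b v) = 0"
  proof -
    have "(\<Sum>v\<in>supp qs. F b v) = - (\<Sum>v\<in>supp qs. (ind b x - ind v x) * pprod qs (sw b v x))"
      unfolding sum_negf[symmetric]
    proof (rule sum.cong[OF refl])
      fix v assume "v \<in> supp qs"
      then have "v \<in> M0" using suppM0 by auto
      then show "F b v = - ((ind b x - ind v x) * pprod qs (sw b v x))"
        using Fbv by (simp add: h_def algebra_simps)
    qed
    also have "(\<Sum>v\<in>supp qs. (ind b x - ind v x) * pprod qs (sw b v x)) = 0" by (rule F_zero) (use ab in auto)
    finally show ?thesis by simp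
  qed
  have ZR: "(\<Sum>v\<in>R. F a v + F b v) = real (card R) * (g x * h x)"
  proof -
    have "(\<Sum>v\<in>R. F a v + F b v) = (\<Sum>v\<in>R. g x * h x)"
    proof (rule sum.cong[OF refl])
      fix v assume v: "v \<in> R"
      then have v0: "v \<in> M0" "v \<notin> supp qs" by (auto simp: R_def)
      have "h (sw a v x) = h x" "h (sw b v x) = h x"
        unfolding h_def by (rule pprod_sw_out, use ab v0 in auto)+
      then show "F a v + F b v = g x * h x" using Fav[OF v0(1)] Fbv[OF v0(1)]
        by (simp add: g_def algebra_simps)
    qed
    then show ?thesis by simp
  qed
  have cardR: "card R = card M - 2 - 2 * length qs"
  proof -
    have "card M0 = card M - 2" using ab Cons.prems by (simp add: M0_def card_Diff_subset)
    moreover have "card R = card M0 - card (supp qs)"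
      unfolding R_def using suppM0 fin by (simp add: card_Diff_subset)
    ultimately show ?thesis using card_supp[OF ab(4)] by simp
  qed
  have cardM: "card M \<ge> 2 + 2 * length qs"
  proof -
    have "card (insert a (insert b (supp qs))) \<le> card M"
      by (rule card_mono) (use Cons.prems ab in auto)
    then show ?thesis using ab card_supp[OF ab(4)] by simp
  qed
  have sumM0: "(\<Sum>v\<in>M0. F a v + F b v) = real (card R) * (g x * h x)"
  proof -
    have "(\<Sum>v\<in>M0. F a v + F b v) = (\<Sum>v\<in>supp qs. F a v + F b v) + (\<Sum>v\<in>R. F a v + F b v)"
      unfolding M0split by (rule sum.union_disjoint) (use fin in \<open>auto simp: R_def\<close>)
    then show ?thesis using Za Zb ZR by (simp add: sum.distrib)
  qed
  have "Lop M (pprod (p#qs)) x = (\<Sum>u\<in>M. \<Sum>v\<in>M. g x * (h x - h (sw u v x)) + F u v)"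
    unfolding Lop_def pp F_def by (auto intro!: sum.cong simp: algebra_simps)
  also have "\<dots> = g x * Lop M h x + (\<Sum>u\<in>M. \<Sum>v\<in>M. F u v)"
    by (simp add: Lop_def sum.distrib sum_distrib_left)
  also have "\<dots> = g x * Lop M h x + 4 * g x * h x + 2 * (real (card R) * (g x * h x))"
    using T sumM0 by simp
  also have "\<dots> = 2 * real (length (p#qs)) * (real (card M) + 1 - real (length (p#qs))) * pprod (p#qs) x"
    unfolding IH pp cardR using cardM by (simp add: of_nat_diff algebra_simps)
  finally show ?case .
qed


definition psi :: "nat \<Rightarrow> nat \<Rightarrow> nat set \<Rightarrow> real" where
  "psi b i x = (\<Sum>a\<in>{1..<b}. ind a x) - real i - (real b - 1 - 2 * real i) * ind b x"

lemma seq_less_snoc: "length A' = length B' \<Longrightarrow> seq_less (A'@[a]) (B'@[b]) \<longleftrightarrow> seq_less A' B' \<and> a < b"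
  unfolding seq_less_def
  by (auto simp: nth_append less_Suc_eq)

lemma mem_below_snoc:
  assumes "sorted_wrt (<) (B'@[b])" "set (B'@[b]) \<subseteq> {1..n}"
  shows "A'@[a] \<in> below_seqs n (B'@[b]) \<longleftrightarrow> A' \<in> below_seqs n B' \<and> a \<in> {1..<b} - set B' - set A'"
proof
  assume h: "A'@[a] \<in> below_seqs n (B'@[b])"
  then have len: "length A' = length B'" by (simp add: below_seqs_def seqs_def)
  with h have sl: "seq_less A' B'" "a < b" by (simp_all add: below_seqs_def seq_less_snoc)
  show "A' \<in> below_seqs n B' \<and> a \<in> {1..<b} - set B' - set A'"
    using h len sl by (auto simp: below_seqs_def seqs_def)
next
  assume h: "A' \<in> below_seqs n B' \<and> a \<in> {1..<b} - set B' - set A'"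
  then have len: "length A' = length B'" and sl: "seq_less A' B'" "a < b"
    by (auto simp: below_seqs_def seqs_def)
  have bA: "b \<notin> set A'"
  proof
    assume "b \<in> set A'"
    then obtain i where i: "i < length A'" "A' ! i = b" by (auto simp: in_set_conv_nth)
    then have "b < B' ! i" using sl len by (auto simp: seq_less_def)
    moreover have "B' ! i < b" using assms(1) i len by (auto simp: sorted_wrt_append)
    ultimately show False by simp
  qed
  have bn: "b \<le> n" using assms(2) by auto
  show "A'@[a] \<in> below_seqs n (B'@[b])"
    using h len sl bA bn by (auto simp: below_seqs_def seqs_def seq_less_snoc)
qed

lemma below_snoc:
  assumes "sorted_wrt (<) (B'@[b])" "set (B'@[b]) \<subseteq> {1..n}"
  shows "below_seqs n (B'@[b]) = (\<lambda>(A',a). A'@[a]) ` (SIGMA A':below_seqs n B'. {1..<b} - set B' - set A')"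
proof (rule set_eqI)
  fix A
  show "A \<in> below_seqs n (B'@[b]) \<longleftrightarrow> A \<in> (\<lambda>(A',a). A'@[a]) ` (SIGMA A':below_seqs n B'. {1..<b} - set B' - set A')"
  proof
    assume A: "A \<in> below_seqs n (B'@[b])"
    then have "A \<noteq> []" by (auto simp: below_seqs_def seqs_def)
    then have eq: "A = butlast A @ [last A]" by simp
    then have "butlast A @ [last A] \<in> below_seqs n (B'@[b])" using A by simp
    then have "butlast A \<in> below_seqs n B' \<and> last A \<in> {1..<b} - set B' - set (butlast A)"
      using mem_below_snoc[OF assms] by blast
    then show "A \<in> (\<lambda>(A',a). A'@[a]) ` (SIGMA A':below_seqs n B'. {1..<b} - set B' - set A')"
      using eq by (auto intro!: image_eqI[where x="(butlast A, last A)"])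
  next
    assume "A \<in> (\<lambda>(A',a). A'@[a]) ` (SIGMA A':below_seqs n B'. {1..<b} - set B' - set A')"
    then obtain A' a where "A = A'@[a]" "A' \<in> below_seqs n B'" "a \<in> {1..<b} - set B' - set A'" by auto
    then show "A \<in> below_seqs n (B'@[b])" using mem_below_snoc[OF assms] by blast
  qed
qed

lemma chiAB_snoc: "length A' = length B' \<Longrightarrow>
  chiAB (A'@[a]) (B'@[b]) x = chiAB A' B' x * (ind a x - ind b x)"
  by (simp add: chiAB_def nth_append)

lemma finite_seqs: "finite (seqs n d)"
proof -
  have "seqs n d \<subseteq> {s. set s \<subseteq> {1..n} \<and> length s = d}" by (auto simp: seqs_def)
  then show ?thesis using finite_lists_length_eq[of "{1..n}" d] finite_subset by auto
qed

lemma finite_below: "finite (below_seqs n B)"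
  using finite_seqs by (simp add: below_seqs_def)

lemma chiAB_ne0:
  assumes "chiAB A B x \<noteq> 0" "i < length B"
  shows "ind (A!i) x = 1 - ind (B!i) x"
proof -
  have "(ind (A!i) x - ind (B!i) x) \<noteq> 0" using assms unfolding chiAB_def
    by (metis (no_types, lifting) finite_lessThan lessThan_iff prod_zero_iff)
  then show ?thesis by auto
qed

lemma sum_set_distinct: "distinct A \<Longrightarrow> (\<Sum>a\<in>set A. f a) = (\<Sum>i<length A. f (A!i))"
  by (simp add: sum_list_distinct_conv_sum_set[symmetric] sum_list_sum_nth atLeast0LessThan)

lemma chi_snoc:
  assumes "sorted_wrt (<) (B'@[b])" "set (B'@[b]) \<subseteq> {1..n}"
  shows "chi n (B'@[b]) x = chi n B' x * psi b (length B') x"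
proof -
  let ?U = "\<lambda>A'. {1..<b} - set B' - set A'"
  have inj: "inj_on (\<lambda>(A',a). A'@[a]) (SIGMA A':below_seqs n B'. ?U A')"
    by (auto simp: inj_on_def)
  have "chi n (B'@[b]) x = (\<Sum>p\<in>(SIGMA A':below_seqs n B'. ?U A'). chiAB ((\<lambda>(A',a). A'@[a]) p) (B'@[b]) x)"
    unfolding chi_def below_snoc[OF assms] by (rule sum.reindex[OF inj, unfolded comp_def])
  also have "\<dots> = (\<Sum>(A',a)\<in>(SIGMA A':below_seqs n B'. ?U A'). chiAB (A'@[a]) (B'@[b]) x)"
    by (rule sum.cong) auto
  also have "\<dots> = (\<Sum>A'\<in>below_seqs n B'. \<Sum>a\<in>?U A'. chiAB (A'@[a]) (B'@[b]) x)"
    by (rule sum.Sigma[symmetric]) (auto simp: finite_below)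
  also have "\<dots> = (\<Sum>A'\<in>below_seqs n B'. chiAB A' B' x * psi b (length B') x)"
  proof (rule sum.cong[OF refl])
    fix A' assume A': "A' \<in> below_seqs n B'"
    have len: "length A' = length B'" and dA: "distinct A'" and sA: "set A' \<subseteq> {1..n}"
      and disj: "set A' \<inter> set B' = {}" and sl: "seq_less A' B'"
      using A' by (auto simp: below_seqs_def seqs_def)
    have dB: "distinct B'" using assms(1) by (simp add: sorted_wrt_append strict_sorted_iff)
    have Bb: "set B' \<subseteq> {1..<b}" using assms by (auto simp: sorted_wrt_append)
    have Ab: "set A' \<subseteq> {1..<b} - set B'"
    proof
      fix a assume "a \<in> set A'"
      then obtain i where i: "i < length A'" "A' ! i = a" by (auto simp: in_set_conv_nth)
      then have "a < B' ! i" using sl len by (auto simp: seq_less_def)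
      moreover have "B' ! i < b" using assms(1) i len by (auto simp: sorted_wrt_append)
      moreover have "a \<ge> 1" using sA i by (auto dest!: nth_mem)
      ultimately show "a \<in> {1..<b} - set B'" using disj i by (auto dest: nth_mem)
    qed
    have s1: "(\<Sum>a\<in>?U A'. chiAB (A'@[a]) (B'@[b]) x) = chiAB A' B' x * (\<Sum>a\<in>?U A'. ind a x - ind b x)"
      by (simp add: chiAB_snoc[OF len] sum_distrib_left)
    show "(\<Sum>a\<in>?U A'. chiAB (A'@[a]) (B'@[b]) x) = chiAB A' B' x * psi b (length B') x"
    proof (cases "chiAB A' B' x = 0")
      case True then show ?thesis using s1 by simp
    next
      case False
      have cU: "card ({1..<b} - set B') = b - 1 - length B'"
        using Bb dB by (simp add: card_Diff_subset distinct_card)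
      have cUA: "card (?U A') = b - 1 - length B' - length B'"
        using Ab cU dA len by (simp add: Diff_Diff_Int card_Diff_subset distinct_card Int_absorb2 flip: Diff_Diff_Int)
      have le: "length B' + length B' \<le> b - 1"
      proof -
        have "card (set A') \<le> card ({1..<b} - set B')" by (rule card_mono) (use Ab in auto)
        then show ?thesis using cU dA len by (simp add: distinct_card)
      qed
      have sumA: "(\<Sum>a\<in>set A'. ind a x) = real (length B') - (\<Sum>a\<in>set B'. ind a x)"
      proof -
        have "(\<Sum>a\<in>set A'. ind a x) = (\<Sum>i<length B'. ind (A'!i) x)"
          by (simp only: sum_set_distinct[OF dA] len)
        also have "\<dots> = (\<Sum>i<length B'. 1 - ind (B'!i) x)"
          using chiAB_ne0[OF False] by (intro sum.cong) auto
        also have "\<dots> = real (length B') - (\<Sum>a\<in>set B'. ind a x)"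
          by (simp only: sum_subtractf sum_set_distinct[OF dB] sum_constant card_lessThan)
        finally show ?thesis .
      qed
      have sumU: "(\<Sum>a\<in>{1..<b} - set B'. ind a x) = (\<Sum>a\<in>{1..<b}. ind a x) - (\<Sum>a\<in>set B'. ind a x)"
        by (rule sum_diff) (use Bb in auto)
      have sumUA: "(\<Sum>a\<in>?U A'. ind a x) = (\<Sum>a\<in>{1..<b} - set B'. ind a x) - (\<Sum>a\<in>set A'. ind a x)"
        by (rule sum_diff) (use Ab in auto)
      have "(\<Sum>a\<in>?U A'. ind a x - ind b x) = (\<Sum>a\<in>?U A'. ind a x) - real (card (?U A')) * ind b x"
        by (simp add: sum_subtractf)
      also have "\<dots> = psi b (length B') x"
      proof -
        have "b \<ge> 1" using assms(2) by auto
        then have "Suc (length B' + length B') \<le> b" using le by linarith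
        then show ?thesis unfolding sumUA sumU sumA cUA psi_def by (simp add: of_nat_diff)
      qed
      finally show ?thesis using s1 by simp
    qed
  qed
  also have "\<dots> = chi n B' x * psi b (length B') x"
    by (simp add: chi_def sum_distrib_right)
  finally show ?thesis .
qed

lemma chi_Nil: "chi n [] x = 1"
proof -
  have "below_seqs n [] = {[]}" by (auto simp: below_seqs_def seqs_def seq_less_def)
  then show ?thesis by (simp add: chi_def chiAB_def)
qed

lemma chi_prod:
  assumes "sorted_wrt (<) B" "set B \<subseteq> {1..n}"
  shows "chi n B x = (\<Prod>i<length B. psi (B!i) i x)"
  using assms
proof (induction B rule: rev_induct)
  case Nil then show ?case by (simp add: chi_Nil)
next
  case (snoc b B')
  have "sorted_wrt (<) B'" "set B' \<subseteq> {1..n}" using snoc.prems by (auto simp: sorted_wrt_append)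
  then have IH: "chi n B' x = (\<Prod>i<length B'. psi (B'!i) i x)" by (rule snoc.IH)
  show ?case using chi_snoc[OF snoc.prems] IH by (simp add: nth_append)
qed


lemma sorted_split:
  assumes "sorted_wrt (<) (B::nat list)"
  shows "\<exists>j\<le>length B. (\<forall>i<j. B!i \<le> m) \<and> (\<forall>i. j \<le> i \<longrightarrow> i < length B \<longrightarrow> m < B!i)"
  using assms
proof (induction B)
  case Nil then show ?case by simp
next
  case (Cons b B')
  show ?case
  proof (cases "b \<le> m")
    case True
    obtain j where j: "j \<le> length B'" "\<forall>i<j. B'!i \<le> m" "\<forall>i. j \<le> i \<longrightarrow> i < length B' \<longrightarrow> m < B'!i"
      using Cons by auto
    show ?thesis
      apply (rule exI[of _ "Suc j"])
      using j True by (auto simp: nth_Cons' less_Suc_eq_0_disj)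
  next
    case False
    have "m < (b#B')!i" if "i < length (b#B')" for i
    proof (cases i)
      case 0 then show ?thesis using False by simp
    next
      case (Suc k)
      then have "B'!k \<in> set B'" using that by simp
      then show ?thesis using Cons.prems False Suc by fastforce
    qed
    then show ?thesis by (intro exI[of _ 0]) auto
  qed
qed

lemma sum_sw_ivl:
  assumes "u \<in> {1..<b}" "v \<in> {1..<b}"
  shows "(\<Sum>a\<in>{1..<b}. ind a (sw u v x)) = (\<Sum>a\<in>{1..<b}. ind a x)"
proof -
  have "(\<Sum>a\<in>{1..<b}. ind a (sw u v x)) = (\<Sum>a\<in>{1..<b}. ind (tr u v a) x)" by simp
  also have "\<dots> = (\<Sum>a\<in>{1..<b}. ind a x)"
    by (rule sum.reindex_bij_witness[where i="tr u v" and j="tr u v"]) (use assms in \<open>auto simp: tr_def\<close>)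
  finally show ?thesis .
qed

lemma psi_sw:
  assumes "u \<in> {1..m}" "v \<in> {1..m}" "m < b"
  shows "psi b i (sw u v x) = psi b i x"
proof -
  have "tr u v b = b" using assms by (auto simp: tr_def)
  then show ?thesis unfolding psi_def using sum_sw_ivl[of u b v x] assms by auto
qed

lemma Lop_mult_inv:
  assumes "\<And>u v. u \<in> M \<Longrightarrow> v \<in> M \<Longrightarrow> \<Phi> (sw u v x) = \<Phi> x"
  shows "Lop M (\<lambda>y. g y * \<Phi> y) x = \<Phi> x * Lop M g x"
  unfolding Lop_def sum_distrib_left
  by (intro sum.cong refl) (simp add: assms algebra_simps)

lemma Lop_sum:
  assumes "finite I"
  shows "Lop M (\<lambda>y. \<Sum>i\<in>I. g i y) x = (\<Sum>i\<in>I. Lop M (g i) x)"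
  unfolding Lop_def by (simp add: sum_subtractf[symmetric] sum.swap[of _ I])

lemma Lop_cong: "(\<And>y. g y = h y) \<Longrightarrow> Lop M g x = Lop M h x"
proof -
  assume "\<And>y. g y = h y"
  then have "g = h" by auto
  then show ?thesis by simp
qed

lemma chiAB_pprod: "length A = length C \<Longrightarrow> chiAB A C x = pprod (zip A C) x"
proof (induction A C rule: list_induct2)
  case Nil then show ?case by (simp add: chiAB_def)
next
  case (Cons a A c C)
  have "chiAB (a#A) (c#C) x = (ind a x - ind c x) * chiAB A C x"
    unfolding chiAB_def length_Cons prod.lessThan_Suc_shift by simp
  then show ?case using Cons.IH by simp
qed

lemma chi_top_eigen:
  assumes "sorted_wrt (<) C" "set C \<subseteq> {1..m}"
  shows "Lop {1..m} (chi n C) x = 2 * real (length C) * (real m + 1 - real (length C)) * chi n C x"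
proof -
  have "Lop {1..m} (chi n C) x = (\<Sum>A\<in>below_seqs n C. Lop {1..m} (chiAB A C) x)"
    unfolding chi_def by (rule Lop_sum[OF finite_below])
  also have "\<dots> = (\<Sum>A\<in>below_seqs n C. 2 * real (length C) * (real m + 1 - real (length C)) * chiAB A C x)"
  proof (rule sum.cong[OF refl])
    fix A assume A: "A \<in> below_seqs n C"
    have len: "length A = length C" and dA: "distinct A" and sA: "set A \<subseteq> {1..n}"
      and disj: "set A \<inter> set C = {}" and sl: "seq_less A C"
      using A by (auto simp: below_seqs_def seqs_def)
    have dC: "distinct C" using assms(1) by (simp add: strict_sorted_iff)
    have Am: "set A \<subseteq> {1..m}"
    proof
      fix a assume "a \<in> set A"
      then obtain i where i: "i < length A" "A ! i = a" by (auto simp: in_set_conv_nth)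
      then have "a < C ! i" using sl len by (auto simp: seq_less_def)
      moreover have "C ! i \<le> m" using assms(2) i len by (auto dest!: nth_mem)
      moreover have "a \<ge> 1" using sA i by (auto dest!: nth_mem)
      ultimately show "a \<in> {1..m}" by auto
    qed
    have ok: "okp (zip A C)" using len dA dC disj by (simp add: okp_def)
    have su: "supp (zip A C) \<subseteq> {1..m}" using len Am assms(2) by (simp add: supp_def)
    have "Lop {1..m} (chiAB A C) x = Lop {1..m} (pprod (zip A C)) x"
      by (rule Lop_cong) (simp add: chiAB_pprod len)
    also have "\<dots> = 2 * real (length C) * (real m + 1 - real (length C)) * pprod (zip A C) x"
      using L_pprod[OF _ su ok] len by simp
    finally show "Lop {1..m} (chiAB A C) x = 2 * real (length C) * (real m + 1 - real (length C)) * chiAB A C x"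
      by (simp add: chiAB_pprod len)
  qed
  also have "\<dots> = 2 * real (length C) * (real m + 1 - real (length C)) * chi n C x"
    by (simp add: chi_def sum_distrib_left)
  finally show ?thesis .
qed

lemma chi_eigen:
  assumes "sorted_wrt (<) B" "set B \<subseteq> {1..n}" "j \<le> length B"
    "\<forall>i<j. B!i \<le> m" "\<forall>i. j \<le> i \<longrightarrow> i < length B \<longrightarrow> m < B!i"
  shows "Lop {1..m} (chi n B) x = 2 * real j * (real m + 1 - real j) * chi n B x"
proof -
  define C where "C = take j B"
  define \<Phi> where "\<Phi> y = (\<Prod>i\<in>{j..<length B}. psi (B!i) i y)" for y
  have lenC: "length C = j" using assms(3) by (simp add: C_def)
  have sC: "sorted_wrt (<) C" using assms(1) by (simp add: C_def sorted_wrt_take)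
  have CB: "set C \<subseteq> {1..n}" using assms(2) set_take_subset[of j B] by (auto simp: C_def)
  have Cm: "set C \<subseteq> {1..m}"
  proof
    fix c assume "c \<in> set C"
    then obtain i where i: "i < j" "C ! i = c" using lenC by (auto simp: in_set_conv_nth)
    then have "c = B ! i" by (simp add: C_def)
    then show "c \<in> {1..m}" using assms i CB \<open>c \<in> set C\<close> by auto
  qed
  have fact: "chi n B y = chi n C y * \<Phi> y" for y
  proof -
    have "chi n B y = (\<Prod>i<length B. psi (B!i) i y)" by (rule chi_prod[OF assms(1,2)])
    also have "\<dots> = (\<Prod>i\<in>{0..<j}. psi (B!i) i y) * \<Phi> y"
      unfolding \<Phi>_def using assms(3) by (simp add: prod.atLeastLessThan_concat atLeast0LessThan[symmetric])
    also have "(\<Prod>i\<in>{0..<j}. psi (B!i) i y) = chi n C y"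
      using chi_prod[OF sC CB] lenC by (simp add: C_def atLeast0LessThan)
    finally show ?thesis .
  qed
  have inv: "\<Phi> (sw u v x) = \<Phi> x" if "u \<in> {1..m}" "v \<in> {1..m}" for u v
    unfolding \<Phi>_def using assms(5) that by (intro prod.cong refl psi_sw) auto
  have "Lop {1..m} (chi n B) x = Lop {1..m} (\<lambda>y. chi n C y * \<Phi> y) x"
    by (rule Lop_cong) (simp add: fact)
  also have "\<dots> = \<Phi> x * Lop {1..m} (chi n C) x" by (rule Lop_mult_inv) (use inv in auto)
  also have "\<dots> = 2 * real j * (real m + 1 - real j) * chi n B x"
    using chi_top_eigen[OF sC Cm] lenC fact by simp
  finally show ?thesis .
qed


lemma sw_image: "sw u v x = tr u v ` x"
proof -
  have "w \<in> sw u v x \<longleftrightarrow> w \<in> tr u v ` x" for w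
    by (auto simp: image_iff) (metis tr_tr)
  then show ?thesis by auto
qed

lemma inj_tr: "inj (tr u v)"
  by (metis injI tr_tr)

lemma finite_slice: "finite (slice n r)"
proof -
  have "slice n r \<subseteq> Pow {1..n}" by (auto simp: slice_def)
  then show ?thesis by (rule finite_subset) simp
qed

lemma sw_slice:
  assumes "u \<in> {1..n}" "v \<in> {1..n}" "x \<in> slice n r"
  shows "sw u v x \<in> slice n r"
proof -
  have "card (sw u v x) = card x" unfolding sw_image
    by (rule card_image) (meson inj_tr inj_on_subset subset_UNIV)
  moreover have "sw u v x \<subseteq> {1..n}"
  proof
    fix w assume "w \<in> sw u v x"
    then have "tr u v w \<in> {1..n}" using assms by (auto simp: slice_def)
    then show "w \<in> {1..n}" using assms by (auto simp: tr_def split: if_splits)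
  qed
  ultimately show ?thesis using assms by (auto simp: slice_def)
qed

lemma sum_sw_slice:
  assumes "u \<in> {1..n}" "v \<in> {1..n}"
  shows "(\<Sum>x\<in>slice n r. F (sw u v x)) = (\<Sum>x\<in>slice n r. F x)"
  by (rule sum.reindex_bij_witness[where i="sw u v" and j="sw u v"]) (use sw_slice assms in auto)

lemma Lop_selfadj:
  assumes "M \<subseteq> {1..n}"
  shows "(\<Sum>x\<in>slice n r. Lop M g x * k x) = (\<Sum>x\<in>slice n r. g x * Lop M k x)"
proof -
  have fM: "finite M" using assms finite_subset by blast
  have key: "(\<Sum>x\<in>slice n r. g (sw u v x) * k x) = (\<Sum>x\<in>slice n r. g x * k (sw u v x))"
    if "u \<in> M" "v \<in> M" for u v
    using sum_sw_slice[where F="\<lambda>x. g x * k (sw u v x)" and n=n and r=r and u=u and v=v] that assms by (auto simp: subset_iff)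
  have "(\<Sum>x\<in>slice n r. Lop M g x * k x)
      = (\<Sum>u\<in>M. \<Sum>v\<in>M. (\<Sum>x\<in>slice n r. g x * k x) - (\<Sum>x\<in>slice n r. g (sw u v x) * k x))"
    unfolding Lop_def sum_distrib_right
    by (simp add: sum.swap[of _ "slice n r"] sum_subtractf[symmetric] algebra_simps)
  also have "\<dots> = (\<Sum>u\<in>M. \<Sum>v\<in>M. (\<Sum>x\<in>slice n r. g x * k x) - (\<Sum>x\<in>slice n r. g x * k (sw u v x)))"
    using key by (intro sum.cong refl) auto
  also have "\<dots> = (\<Sum>x\<in>slice n r. g x * Lop M k x)"
    unfolding Lop_def sum_distrib_left
    by (simp add: sum.swap[of _ "slice n r"] sum_subtractf[symmetric] algebra_simps)
  finally show ?thesis .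
qed

lemma compl_sw:
  assumes "u \<in> {1..n}" "v \<in> {1..n}"
  shows "{1..n} - sw u v y = sw u v ({1..n} - y)"
  using assms by (auto simp: tr_def split: if_splits)

lemma Lop_compl:
  assumes "M \<subseteq> {1..n}"
  shows "Lop M (\<lambda>y. g ({1..n} - y)) x = Lop M g ({1..n} - x)"
  unfolding Lop_def using assms compl_sw by (intro sum.cong refl) (auto simp: subset_iff)

lemma basis_eigen:
  assumes "sorted_wrt (<) B" "set B \<subseteq> {1..n}" "j \<le> length B" "m \<le> n"
    "\<forall>i<j. B!i \<le> m" "\<forall>i. j \<le> i \<longrightarrow> i < length B \<longrightarrow> m < B!i"
  shows "Lop {1..m} (slice_basis n r B) x = 2 * real j * (real m + 1 - real j) * slice_basis n r B x"
proof (cases "2 * r \<le> n")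
  case True
  have "Lop {1..m} (slice_basis n r B) x = Lop {1..m} (chi n B) x"
    by (rule Lop_cong) (simp add: slice_basis_def True)
  then show ?thesis using chi_eigen[OF assms(1,2,3,5,6)] True by (simp add: slice_basis_def)
next
  case False
  have "Lop {1..m} (slice_basis n r B) x = Lop {1..m} (\<lambda>y. chi n B ({1..n} - y)) x"
    by (rule Lop_cong) (simp add: slice_basis_def False)
  also have "\<dots> = Lop {1..m} (chi n B) ({1..n} - x)" by (rule Lop_compl) (use assms in auto)
  finally show ?thesis using chi_eigen[OF assms(1,2,3,5,6)] False by (simp add: slice_basis_def)
qed

lemma split_card:
  assumes "sorted_wrt (<) (B::nat list)" "j \<le> length B"
    "\<forall>i<j. B!i \<le> m" "\<forall>i. j \<le> i \<longrightarrow> i < length B \<longrightarrow> m < B!i"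
  shows "card (set B \<inter> {..m}) = j"
proof -
  have "set B \<inter> {..m} = set (take j B)"
  proof
    show "set B \<inter> {..m} \<subseteq> set (take j B)"
    proof
      fix b assume "b \<in> set B \<inter> {..m}"
      then obtain i where i: "i < length B" "B!i = b" "b \<le> m" by (auto simp: in_set_conv_nth)
      have "\<not> j \<le> i"
      proof
        assume "j \<le> i"
        then have "m < B!i" using assms(4) i(1) by simp
        then show False using i by linarith
      qed
      then have "i < j" by simp
      then show "b \<in> set (take j B)" using i by (auto simp: in_set_conv_nth)
    qed
    show "set (take j B) \<subseteq> set B \<inter> {..m}"
    proof
      fix b assume "b \<in> set (take j B)"
      then obtain i where i: "i < j" "take j B ! i = b" using assms(2) by (auto simp: in_set_conv_nth)
      then have "b = B!i" "i < length B" using assms(2) by auto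
      then show "b \<in> set B \<inter> {..m}" using assms(3) i(1) by auto
    qed
  qed
  moreover have "distinct (take j B)" using assms(1) by (simp add: strict_sorted_iff)
  ultimately show ?thesis using assms(2) by (simp add: distinct_card)
qed

lemma split_bound:
  assumes "B \<in> top_sets n e" "j \<le> length B" "\<forall>i<j. B!i \<le> m"
  shows "2 * j \<le> m"
proof -
  obtain A where A: "A \<in> below_seqs n B" using assms(1) by (auto simp: top_sets_def)
  have len: "length A = length B" and dA: "distinct A" and sA: "set A \<subseteq> {1..n}"
    and disj: "set A \<inter> set B = {}" and sl: "seq_less A B"
    using A by (auto simp: below_seqs_def seqs_def)
  have sB: "set B \<subseteq> {1..n}" "distinct B" using assms(1) by (auto simp: top_sets_def seqs_def)
  have s1: "set (take j A) \<subseteq> {1..m}"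
  proof
    fix a assume "a \<in> set (take j A)"
    then obtain i where i: "i < j" "A!i = a" using assms(2) len by (auto simp: in_set_conv_nth)
    have il: "i < length A" using i assms(2) len by simp
    then have "A!i \<in> set A" by simp
    then have "a \<ge> 1" using sA i by auto
    moreover have "a < B!i" using sl il i len by (auto simp: seq_less_def)
    ultimately have "a < B!i" "a \<ge> 1" by auto
    then show "a \<in> {1..m}" using assms(3) i by fastforce
  qed
  have s2: "set (take j B) \<subseteq> {1..m}"
  proof
    fix b assume "b \<in> set (take j B)"
    then obtain i where i: "i < j" "B!i = b" using assms(2) by (auto simp: in_set_conv_nth)
    then show "b \<in> {1..m}" using assms(2,3) sB(1) by (force dest!: nth_mem)
  qed
  have d: "set (take j A) \<inter> set (take j B) = {}" using disj set_take_subset by fast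
  have "card (set (take j A) \<union> set (take j B)) \<le> card {1..m}"
    by (rule card_mono) (use s1 s2 in auto)
  moreover have "card (set (take j A) \<union> set (take j B)) = j + j"
    using d dA sB(2) assms(2) len by (simp add: card_Un_disjoint distinct_card)
  ultimately show ?thesis by simp
qed

lemma orth:
  assumes "B \<in> top_sets n e" "B' \<in> top_sets n e'" "B \<noteq> B'"
  shows "(\<Sum>x\<in>slice n r. slice_basis n r B x * slice_basis n r B' x) = 0"
proof -
  have sB: "sorted_wrt (<) B" "set B \<subseteq> {1..n}" using assms(1) by (auto simp: top_sets_def seqs_def)
  have sB': "sorted_wrt (<) B'" "set B' \<subseteq> {1..n}" using assms(2) by (auto simp: top_sets_def seqs_def)
  have neq: "set B \<noteq> set B'"
    using sB(1) sB'(1) assms(3) by (metis sorted_distinct_set_unique strict_sorted_iff)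
  define D where "D = (set B - set B') \<union> (set B' - set B)"
  have Dne: "D \<noteq> {}" using neq by (auto simp: D_def)
  have fD: "finite D" by (simp add: D_def)
  define y where "y = Min D"
  have yD: "y \<in> D" using Min_in[OF fD Dne] by (simp add: y_def)
  have below: "set B \<inter> {..<y} = set B' \<inter> {..<y}"
  proof -
    have "z \<in> set B \<longleftrightarrow> z \<in> set B'" if "z < y" for z
    proof (rule ccontr)
      assume "\<not> (z \<in> set B \<longleftrightarrow> z \<in> set B')"
      then have "z \<in> D" by (auto simp: D_def)
      then have "y \<le> z" using Min_le[OF fD] by (simp add: y_def)
      then show False using that by simp
    qed
    then show ?thesis by auto
  qed
  have yn: "y \<in> {1..n}" using yD sB(2) sB'(2) by (auto simp: D_def)
  define m where "m = y"
  obtain j where j: "j \<le> length B" "\<forall>i<j. B!i \<le> m" "\<forall>i. j \<le> i \<longrightarrow> i < length B \<longrightarrow> m < B!i"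
    using sorted_split[OF sB(1)] by blast
  obtain j' where j': "j' \<le> length B'" "\<forall>i<j'. B'!i \<le> m" "\<forall>i. j' \<le> i \<longrightarrow> i < length B' \<longrightarrow> m < B'!i"
    using sorted_split[OF sB'(1)] by blast
  have cj: "card (set B \<inter> {..m}) = j" by (rule split_card[OF sB(1) j])
  have cj': "card (set B' \<inter> {..m}) = j'" by (rule split_card[OF sB'(1) j'])
  have atm: "{..m} = insert y {..<y}" by (auto simp: m_def)
  have jne: "j \<noteq> j'"
  proof -
    have "card (set B \<inter> {..m}) \<noteq> card (set B' \<inter> {..m})"
    proof (cases "y \<in> set B")
      case True
      then have "y \<notin> set B'" using yD by (auto simp: D_def)
      then have "set B' \<inter> {..m} = set B' \<inter> {..<y}" "set B \<inter> {..m} = insert y (set B \<inter> {..<y})"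
        using True atm by auto
      then show ?thesis using below by simp
    next
      case False
      then have "y \<in> set B'" using yD by (auto simp: D_def)
      then have "set B \<inter> {..m} = set B \<inter> {..<y}" "set B' \<inter> {..m} = insert y (set B' \<inter> {..<y})"
        using False atm by auto
      then show ?thesis using below by simp
    qed
    then show ?thesis using cj cj' by simp
  qed
  have b1: "2 * j \<le> m" by (rule split_bound[OF assms(1) j(1,2)])
  have b2: "2 * j' \<le> m" by (rule split_bound[OF assms(2) j'(1,2)])
  have mn: "m \<le> n" using yn by (simp add: m_def)
  define lam where "lam = 2 * real j * (real m + 1 - real j)"
  define lam' where "lam' = 2 * real j' * (real m + 1 - real j')"
  have E1: "Lop {1..m} (slice_basis n r B) x = lam * slice_basis n r B x" for x
    unfolding lam_def by (rule basis_eigen[OF sB j(1) mn j(2,3)])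
  have E2: "Lop {1..m} (slice_basis n r B') x = lam' * slice_basis n r B' x" for x
    unfolding lam'_def by (rule basis_eigen[OF sB' j'(1) mn j'(2,3)])
  have lne: "lam \<noteq> lam'"
  proof -
    have "lam - lam' = 2 * (real j - real j') * (real m + 1 - real j - real j')"
      unfolding lam_def lam'_def by (simp add: algebra_simps)
    moreover have "real m + 1 - real j - real j' > 0" using b1 b2 by linarith
    moreover have "real j - real j' \<noteq> 0" using jne by simp
    ultimately show ?thesis by auto
  qed
  let ?S = "(\<Sum>x\<in>slice n r. slice_basis n r B x * slice_basis n r B' x)"
  have "lam * ?S = (\<Sum>x\<in>slice n r. Lop {1..m} (slice_basis n r B) x * slice_basis n r B' x)"
    by (simp only: E1) (simp add: sum_distrib_left algebra_simps)
  also have "\<dots> = (\<Sum>x\<in>slice n r. slice_basis n r B x * Lop {1..m} (slice_basis n r B') x)"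
    by (rule Lop_selfadj) (use mn in auto)
  also have "\<dots> = lam' * ?S"
    by (simp only: E2) (simp add: sum_distrib_left algebra_simps)
  finally have "(lam - lam') * ?S = 0" by (simp add: algebra_simps)
  then show ?thesis using lne by simp
qed


lemma Lop_diff: "Lop M (\<lambda>y. g y - k y) x = Lop M g x - Lop M k x"
  unfolding Lop_def by (simp add: sum_subtractf[symmetric] algebra_simps)

lemma Lop_scale: "Lop M (\<lambda>y. c * g y) x = c * Lop M g x"
  unfolding Lop_def by (simp add: sum_distrib_left algebra_simps)

lemma Lop_psd: "(\<Sum>x\<in>slice n r. Lop {1..n} g x * g x) \<ge> 0"
proof -
  let ?S = "slice n r"
  have key: "(\<Sum>x\<in>?S. g (sw u v x) * g x) \<le> (\<Sum>x\<in>?S. g x * g x)"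
    if "u \<in> {1..n}" "v \<in> {1..n}" for u v
  proof -
    have "(\<Sum>x\<in>?S. g (sw u v x) * g x) \<le> (\<Sum>x\<in>?S. (g (sw u v x) * g (sw u v x) + g x * g x) / 2)"
    proof (rule sum_mono)
      fix x
      have "0 \<le> (g (sw u v x) - g x)^2" by simp
      then show "g (sw u v x) * g x \<le> (g (sw u v x) * g (sw u v x) + g x * g x) / 2"
        by (simp add: power2_eq_square algebra_simps)
    qed
    also have "\<dots> = ((\<Sum>x\<in>?S. g (sw u v x) * g (sw u v x)) + (\<Sum>x\<in>?S. g x * g x)) / 2"
      by (simp add: sum_divide_distrib[symmetric] sum.distrib)
    also have "(\<Sum>x\<in>?S. g (sw u v x) * g (sw u v x)) = (\<Sum>x\<in>?S. g x * g x)"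
      by (rule sum_sw_slice[OF that])
    finally show ?thesis by simp
  qed
  have "(\<Sum>x\<in>?S. Lop {1..n} g x * g x)
      = (\<Sum>u\<in>{1..n}. \<Sum>v\<in>{1..n}. (\<Sum>x\<in>?S. g x * g x) - (\<Sum>x\<in>?S. g (sw u v x) * g x))"
    unfolding Lop_def sum_distrib_right
    by (simp add: sum.swap[of _ "slice n r"] sum_subtractf[symmetric] algebra_simps)
  also have "\<dots> \<ge> 0"
    using key by (intro sum_nonneg) auto
  finally show ?thesis .
qed

lemma finite_top: "finite (top_sets n e)"
  using finite_seqs[of n e] by (rule finite_subset[rotated]) (auto simp: top_sets_def)

lemma top_eigen:
  assumes "B \<in> top_sets n e"
  shows "Lop {1..n} (slice_basis n r B) x = 2 * real e * (real n + 1 - real e) * slice_basis n r B x"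
proof -
  have sB: "sorted_wrt (<) B" "set B \<subseteq> {1..n}" "length B = e" using assms by (auto simp: top_sets_def seqs_def)
  have "\<forall>i<length B. B!i \<le> n" using sB(2) by (auto dest!: nth_mem)
  then show ?thesis using basis_eigen[OF sB(1,2), where j="length B" and m=n and r=r and x=x] sB(3) by simp
qed

lemma bessel:
  fixes f :: "nat set \<Rightarrow> real" and BB :: "nat list set" and n r :: nat
  assumes fin: "finite BB" and top: "\<And>B. B \<in> BB \<Longrightarrow> B \<in> top_sets n (length B)"
  defines "h \<equiv> \<lambda>B x. slice_basis n r B x"
  defines "ip \<equiv> \<lambda>B. \<Sum>x\<in>slice n r. f x * h B x"
  defines "N \<equiv> \<lambda>B. \<Sum>x\<in>slice n r. h B x * h B x"
  defines "lam \<equiv> \<lambda>B::nat list. 2 * real (length B) * (real n + 1 - real (length B))"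
  shows "(\<Sum>B\<in>BB. lam B * (ip B)^2 / N B) \<le> (\<Sum>x\<in>slice n r. Lop {1..n} f x * f x)"
proof -
  let ?S = "slice n r"
  define c where "c B = ip B / N B" for B
  define G where "G x = (\<Sum>B\<in>BB. c B * h B x)" for x
  define LG where "LG x = (\<Sum>B\<in>BB. c B * lam B * h B x)" for x
  have eig: "Lop {1..n} (h B) x = lam B * h B x" if "B \<in> BB" for B x
    unfolding h_def lam_def using top_eigen[OF top[OF that]] by simp
  have orth': "(\<Sum>x\<in>?S. h B x * h B' x) = 0" if "B \<in> BB" "B' \<in> BB" "B \<noteq> B'" for B B'
    unfolding h_def by (rule orth[OF top[OF that(1)] top[OF that(2)] that(3)])
  have LopG: "Lop {1..n} G x = LG x" for x
  proof -
    have "Lop {1..n} G x = (\<Sum>B\<in>BB. Lop {1..n} (\<lambda>y. c B * h B y) x)"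
      unfolding G_def by (rule Lop_sum[OF fin])
    also have "\<dots> = LG x" unfolding LG_def Lop_scale
    proof (intro sum.cong refl)
      fix B assume "B \<in> BB"
      then show "c B * Lop {1..n} (h B) x = c B * lam B * h B x" using eig[of B x] by simp
    qed
    finally show ?thesis .
  qed
  have Lopg: "Lop {1..n} (\<lambda>y. f y - G y) x = Lop {1..n} f x - LG x" for x
    by (simp only: Lop_diff LopG)
  have adj: "(\<Sum>x\<in>?S. Lop {1..n} f x * h B x) = lam B * ip B" if "B \<in> BB" for B
  proof -
    have "(\<Sum>x\<in>?S. Lop {1..n} f x * h B x) = (\<Sum>x\<in>?S. f x * Lop {1..n} (h B) x)"
      by (rule Lop_selfadj) simp
    also have "\<dots> = lam B * ip B" unfolding ip_def using eig[OF that]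
      by (simp add: sum_distrib_left algebra_simps)
    finally show ?thesis .
  qed
  have hG: "(\<Sum>x\<in>?S. h B x * G x) = c B * N B" if "B \<in> BB" for B
  proof -
    have "(\<Sum>x\<in>?S. h B x * G x) = (\<Sum>B'\<in>BB. c B' * (\<Sum>x\<in>?S. h B x * h B' x))"
      unfolding G_def by (simp add: sum_distrib_left sum.swap[of _ ?S] algebra_simps)
    also have "\<dots> = c B * (\<Sum>x\<in>?S. h B x * h B x) + (\<Sum>B'\<in>BB - {B}. c B' * (\<Sum>x\<in>?S. h B x * h B' x))"
      using that fin by (simp add: sum.remove)
    also have "(\<Sum>B'\<in>BB - {B}. c B' * (\<Sum>x\<in>?S. h B x * h B' x)) = 0"
      using orth' that by (intro sum.neutral) auto
    finally show ?thesis by (simp add: N_def)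
  qed
  have T2: "(\<Sum>x\<in>?S. Lop {1..n} f x * G x) = (\<Sum>B\<in>BB. c B * lam B * ip B)"
  proof -
    have "(\<Sum>x\<in>?S. Lop {1..n} f x * G x) = (\<Sum>B\<in>BB. c B * (\<Sum>x\<in>?S. Lop {1..n} f x * h B x))"
      unfolding G_def by (simp add: sum_distrib_left sum.swap[of _ ?S] algebra_simps)
    also have "\<dots> = (\<Sum>B\<in>BB. c B * lam B * ip B)" using adj by (intro sum.cong refl) simp
    finally show ?thesis .
  qed
  have T3: "(\<Sum>x\<in>?S. LG x * f x) = (\<Sum>B\<in>BB. c B * lam B * ip B)"
    unfolding LG_def ip_def by (simp add: sum_distrib_left sum_distrib_right sum.swap[of _ ?S] algebra_simps)
  have T4: "(\<Sum>x\<in>?S. LG x * G x) = (\<Sum>B\<in>BB. c B * lam B * (c B * N B))"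
  proof -
    have "(\<Sum>x\<in>?S. LG x * G x) = (\<Sum>B\<in>BB. c B * lam B * (\<Sum>x\<in>?S. h B x * G x))"
      unfolding LG_def by (simp add: sum_distrib_left sum_distrib_right sum.swap[of _ ?S] algebra_simps)
    also have "\<dots> = (\<Sum>B\<in>BB. c B * lam B * (c B * N B))" using hG by (intro sum.cong refl) simp
    finally show ?thesis .
  qed
  have e1: "c B * lam B * ip B = lam B * (ip B)^2 / N B" for B
    by (simp add: c_def power2_eq_square)
  have e2: "c B * lam B * (c B * N B) = lam B * (ip B)^2 / N B" for B
    by (cases "N B = 0") (simp_all add: c_def power2_eq_square)
  have "0 \<le> (\<Sum>x\<in>?S. Lop {1..n} (\<lambda>y. f y - G y) x * (f x - G x))"
    by (rule Lop_psd)
  also have "\<dots> = (\<Sum>x\<in>?S. Lop {1..n} f x * f x) - (\<Sum>x\<in>?S. Lop {1..n} f x * G x)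
        - (\<Sum>x\<in>?S. LG x * f x) + (\<Sum>x\<in>?S. LG x * G x)"
    unfolding Lopg by (simp add: sum_subtractf sum.distrib algebra_simps)
  also have "\<dots> = (\<Sum>x\<in>?S. Lop {1..n} f x * f x) - (\<Sum>B\<in>BB. lam B * (ip B)^2 / N B)"
    unfolding T2 T3 T4 e1 e2 by simp
  finally show ?thesis by simp
qed


lemma card_slice_pos: "r \<le> n \<Longrightarrow> card (slice n r) > 0"
proof -
  assume "r \<le> n"
  then have "{1..r} \<in> slice n r" by (auto simp: slice_def)
  then show ?thesis using finite_slice card_gt_0_iff by blast
qed

lemma term_eq:
  assumes "K > 0"
  shows "((a / K) / (b / K))^2 * (b / K) = (a::real)^2 / (K * b)"
  using assms by (cases "b = 0") (simp_all add: field_simps power2_eq_square)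

lemma weight_bound:
  assumes "r \<le> n"
  defines "m \<equiv> min r (n - r)"
  shows "weight_gt n r f d \<le> (\<Sum>x\<in>slice n r. Lop {1..n} f x * f x)
           / (real (card (slice n r)) * (2 * (real d + 1) * (real n + 1 - real m)))"
proof -
  let ?S = "slice n r"
  define K where "K = real (card ?S)"
  have K: "K > 0" using card_slice_pos[OF assms(1)] by (simp add: K_def)
  define h where "h B x = slice_basis n r B x" for B x
  define ip where "ip B = (\<Sum>x\<in>?S. f x * h B x)" for B
  define N where "N B = (\<Sum>x\<in>?S. h B x * h B x)" for B
  define lam where "lam B = 2 * real (length B) * (real n + 1 - real (length B))" for B :: "nat list"
  define Lam where "Lam = 2 * (real d + 1) * (real n + 1 - real m)"
  define BB where "BB = (\<Union>e\<in>{d<..m}. top_sets n e)"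
  have mn: "m \<le> n" by (simp add: m_def)
  have Lam: "Lam > 0" using mn by (simp add: Lam_def)
  have finBB: "finite BB" by (simp add: BB_def finite_top)
  have topBB: "B \<in> top_sets n (length B)" if "B \<in> BB" for B
    using that by (auto simp: BB_def top_sets_def seqs_def)
  have Nnn: "N B \<ge> 0" for B by (simp add: N_def sum_nonneg)
  have tq: "(fourier_coeff n r f B)^2 * slice_ip n r (slice_basis n r B) (slice_basis n r B) = (ip B)^2 / (K * N B)" for B
    unfolding fourier_coeff_def slice_ip_def using term_eq[OF K] by (simp add: K_def ip_def N_def h_def)
  have "weight_gt n r f d = (\<Sum>e\<in>{d<..m}. \<Sum>B\<in>top_sets n e. (ip B)^2 / (K * N B))"
    unfolding weight_gt_def level_weight_def tq m_def by simp
  also have "\<dots> = (\<Sum>B\<in>BB. (ip B)^2 / (K * N B))"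
    unfolding BB_def
    by (rule sum.UNION_disjoint[symmetric]) (simp_all add: finite_top, auto simp: top_sets_def seqs_def)
  also have "\<dots> \<le> (\<Sum>B\<in>BB. (lam B * (ip B)^2 / N B) / (K * Lam))"
  proof (rule sum_mono)
    fix B assume B: "B \<in> BB"
    then obtain e where e: "e \<in> {d<..m}" "length B = e" by (auto simp: BB_def top_sets_def seqs_def)
    have "lam B \<ge> Lam"
    proof -
      have "real e \<ge> real d + 1" using e by auto
      moreover have "real n + 1 - real e \<ge> real n + 1 - real m" using e by auto
      moreover have "real n + 1 - real m \<ge> 0" using mn by simp
      ultimately have "real e * (real n + 1 - real e) \<ge> (real d + 1) * (real n + 1 - real m)"
        by (meson mult_mono order_trans of_nat_0_le_iff add_nonneg_nonneg zero_le_one)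
      then have "2 * ((real d + 1) * (real n + 1 - real m)) \<le> 2 * (real e * (real n + 1 - real e))" by simp
      moreover have "lam B = 2 * (real e * (real n + 1 - real e))" by (simp add: lam_def e(2))
      moreover have "Lam = 2 * ((real d + 1) * (real n + 1 - real m))" by (simp add: Lam_def)
      ultimately show ?thesis by linarith
    qed
    moreover have q: "(ip B)^2 / N B \<ge> 0" using Nnn[of B] by simp
    ultimately have "Lam * ((ip B)^2 / N B) \<le> lam B * ((ip B)^2 / N B)"
      by (rule mult_right_mono)
    then have "(ip B)^2 / N B \<le> (lam B * ((ip B)^2 / N B)) / Lam"
      using pos_le_divide_eq[OF Lam, of "(ip B)^2 / N B" "lam B * ((ip B)^2 / N B)"]
      by (simp only: mult.commute)
    then have "(ip B)^2 / N B \<le> (lam B * (ip B)^2 / N B) / Lam" by simp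
    then have "((ip B)^2 / N B)/K \<le> ((lam B * (ip B)^2 / N B) / Lam)/K"
      by (rule divide_right_mono) (use K in auto)
    moreover have "(ip B)^2 / (K * N B) = ((ip B)^2 / N B)/K" by simp
    moreover have "(lam B * (ip B)^2 / N B) / (K * Lam) = ((lam B * (ip B)^2 / N B) / Lam)/K" by simp
    ultimately show "(ip B)^2 / (K * N B) \<le> (lam B * (ip B)^2 / N B) / (K * Lam)"
      by (simp only:)
  qed
  also have "\<dots> = (\<Sum>B\<in>BB. lam B * (ip B)^2 / N B) / (K * Lam)"
    by (simp add: sum_divide_distrib)
  also have "\<dots> \<le> (\<Sum>x\<in>?S. Lop {1..n} f x * f x) / (K * Lam)"
    unfolding lam_def ip_def N_def h_def
    by (rule divide_right_mono[OF bessel[OF finBB topBB]]) (use K Lam in auto)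
  finally show ?thesis by (simp add: K_def Lam_def)
qed


definition bad :: "(nat set \<Rightarrow> real) \<Rightarrow> nat set \<Rightarrow> nat \<Rightarrow> real" where
  "bad f x u = of_bool (f x \<noteq> f (insert u x))"

definition Dcnt :: "nat \<Rightarrow> nat \<Rightarrow> (nat set \<Rightarrow> real) \<Rightarrow> real" where
  "Dcnt n r f = (\<Sum>x\<in>slice n r. \<Sum>u\<in>{1..n} - x. bad f x u)"

lemma sum_ind_slice: "x \<in> slice n r \<Longrightarrow> (\<Sum>v\<in>{1..n}. ind v x) = real r"
proof -
  assume x: "x \<in> slice n r"
  have "(\<Sum>v\<in>{1..n}. ind v x) = real (card ({1..n} \<inter> x))"
    by (simp add: sum.inter_filter[symmetric] Int_def)
  also have "{1..n} \<inter> x = x" using x by (auto simp: slice_def)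
  finally show ?thesis using x by (simp add: slice_def)
qed

lemma sum_notin: "finite A \<Longrightarrow> (\<Sum>u\<in>A. (1 - ind u x) * F u) = (\<Sum>u\<in>A - x. F u)"
proof -
  assume A: "finite A"
  have "(\<Sum>u\<in>A. (1 - ind u x) * F u) = (\<Sum>u\<in>A. if u \<notin> x then F u else 0)"
    by (intro sum.cong) auto
  also have "\<dots> = (\<Sum>u\<in>{u\<in>A. u \<notin> x}. F u)" using A by (simp add: sum.inter_filter)
  also have "{u\<in>A. u \<notin> x} = A - x" by auto
  finally show ?thesis .
qed

lemma pattern_sum:
  assumes "x \<in> slice n r"
  shows "(\<Sum>u\<in>{1..n}. \<Sum>v\<in>{1..n}. (1 - ind u x) * ind v x * bad f x u) = real r * (\<Sum>u\<in>{1..n} - x. bad f x u)"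
proof -
  have e: "(\<Sum>v\<in>{1..n}. (1 - ind u x) * ind v x * bad f x u) = (1 - ind u x) * (bad f x u * (\<Sum>v\<in>{1..n}. ind v x))" for u
    by (simp only: sum_distrib_left) (simp only: mult_ac)
  have "(\<Sum>u\<in>{1..n}. \<Sum>v\<in>{1..n}. (1 - ind u x) * ind v x * bad f x u)
      = (\<Sum>u\<in>{1..n}. (1 - ind u x) * (bad f x u * real r))"
    unfolding e sum_ind_slice[OF assms] ..
  also have "\<dots> = (\<Sum>u\<in>{1..n} - x. bad f x u * real r)" by (rule sum_notin) simp
  also have "\<dots> = real r * (\<Sum>u\<in>{1..n} - x. bad f x u)" by (simp only: sum_distrib_left mult.commute)
  finally show ?thesis .
qed

lemma pattern_sum2:
  assumes "x \<in> slice n r"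
  shows "(\<Sum>u\<in>{1..n}. \<Sum>v\<in>{1..n}. (1 - ind v x) * ind u x * bad f x v) = real r * (\<Sum>u\<in>{1..n} - x. bad f x u)"
  using pattern_sum[OF assms, of f] sum.swap[of "\<lambda>u v. (1 - ind v x) * ind u x * bad f x v" "{1..n}" "{1..n}"]
  by simp

lemma edge_bound:
  assumes pm: "\<forall>x\<in>cube n. f x \<in> {-1,1}"
  shows "(\<Sum>x\<in>slice n r. Lop {1..n} f x * f x) \<le> 8 * real r * Dcnt n r f"
proof -
  let ?S = "slice n r"
  let ?N = "{1..n}"
  have inS: "x \<in> cube n" if "x \<in> ?S" for x using that by (auto simp: slice_def cube_def)
  define I :: "nat set \<Rightarrow> nat \<Rightarrow> nat \<Rightarrow> real" where "I x u v = of_bool (f x \<noteq> f (sw u v x))" for x u v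
  define A1 where "A1 x u v = (1 - ind u x) * ind v x * bad f x u" for x u v
  define A2 where "A2 x u v = (1 - ind u x) * ind v x * bad f (sw u v x) v" for x u v
  define A3 where "A3 x u v = (1 - ind v x) * ind u x * bad f x v" for x u v
  define A4 where "A4 x u v = (1 - ind v x) * ind u x * bad f (sw u v x) u" for x u v
  have termeq: "(f x - f (sw u v x)) * f x = 2 * I x u v" if "x \<in> ?S" "u \<in> ?N" "v \<in> ?N" for x u v
  proof -
    have "f x \<in> {-1,1}" "f (sw u v x) \<in> {-1,1}" using pm inS sw_slice that by auto
    then show ?thesis by (auto simp: I_def)
  qed
  have Ile: "I x u v \<le> A1 x u v + A2 x u v + A3 x u v + A4 x u v" for x u v
  proof -
    have nn: "A1 x u v \<ge> 0" "A2 x u v \<ge> 0" "A3 x u v \<ge> 0" "A4 x u v \<ge> 0"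
      by (auto simp: A1_def A2_def A3_def A4_def bad_def)
    consider "u \<notin> x" "v \<in> x" | "u \<in> x" "v \<notin> x" | "(u \<in> x) = (v \<in> x)" by blast
    then show ?thesis
    proof cases
      case 1
      then have uv: "u \<noteq> v" by auto
      have e: "insert v (sw u v x) = insert u x" using 1 uv by (auto simp: tr_def split: if_splits)
      show ?thesis
      proof (cases "f x \<noteq> f (insert u x)")
        case True then have "A1 x u v = 1" using 1 by (simp add: A1_def bad_def)
        then show ?thesis using nn by (simp add: I_def)
      next
        case False then have "I x u v \<le> A2 x u v" using 1 e by (simp add: I_def A2_def bad_def)
        then show ?thesis using nn by simp
      qed
    next
      case 2
      then have uv: "u \<noteq> v" by auto
      have e: "insert u (sw u v x) = insert v x" using 2 uv by (auto simp: tr_def split: if_splits)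
      show ?thesis
      proof (cases "f x \<noteq> f (insert v x)")
        case True then have "A3 x u v = 1" using 2 by (simp add: A3_def bad_def)
        then show ?thesis using nn by (simp add: I_def)
      next
        case False then have "I x u v \<le> A4 x u v" using 2 e by (simp add: I_def A4_def bad_def)
        then show ?thesis using nn by simp
      qed
    next
      case 3
      then have "sw u v x = x" by (auto simp: tr_def split: if_splits)
      then show ?thesis using nn by (simp add: I_def)
    qed
  qed
  have s1: "(\<Sum>x\<in>?S. \<Sum>u\<in>?N. \<Sum>v\<in>?N. A1 x u v) = real r * Dcnt n r f"
  proof -
    have "(\<Sum>x\<in>?S. \<Sum>u\<in>?N. \<Sum>v\<in>?N. A1 x u v) = (\<Sum>x\<in>?S. real r * (\<Sum>u\<in>?N - x. bad f x u))"
    proof (intro sum.cong refl)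
      fix x assume x: "x \<in> ?S"
      show "(\<Sum>u\<in>?N. \<Sum>v\<in>?N. A1 x u v) = real r * (\<Sum>u\<in>?N - x. bad f x u)"
        unfolding A1_def by (rule pattern_sum[OF x])
    qed
    then show ?thesis by (simp only: Dcnt_def sum_distrib_left)
  qed
  have s3: "(\<Sum>x\<in>?S. \<Sum>u\<in>?N. \<Sum>v\<in>?N. A3 x u v) = real r * Dcnt n r f"
  proof -
    have "(\<Sum>x\<in>?S. \<Sum>u\<in>?N. \<Sum>v\<in>?N. A3 x u v) = (\<Sum>x\<in>?S. real r * (\<Sum>u\<in>?N - x. bad f x u))"
    proof (intro sum.cong refl)
      fix x assume x: "x \<in> ?S"
      show "(\<Sum>u\<in>?N. \<Sum>v\<in>?N. A3 x u v) = real r * (\<Sum>u\<in>?N - x. bad f x u)"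
        unfolding A3_def by (rule pattern_sum2[OF x])
    qed
    then show ?thesis by (simp only: Dcnt_def sum_distrib_left)
  qed
  have s2: "(\<Sum>x\<in>?S. \<Sum>u\<in>?N. \<Sum>v\<in>?N. A2 x u v) = real r * Dcnt n r f"
  proof -
    have "(\<Sum>x\<in>?S. \<Sum>u\<in>?N. \<Sum>v\<in>?N. A2 x u v) = (\<Sum>u\<in>?N. \<Sum>v\<in>?N. \<Sum>x\<in>?S. A2 x u v)"
      by (simp add: sum.swap[of _ ?S] sum.swap[of _ "{1..n}" ?S])
    also have "\<dots> = (\<Sum>u\<in>?N. \<Sum>v\<in>?N. \<Sum>x\<in>?S. A3 x u v)"
    proof (rule sum.cong[OF refl], rule sum.cong[OF refl])
      fix u v assume uv: "u \<in> ?N" "v \<in> ?N"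
      have "(\<Sum>x\<in>?S. A2 x u v) = (\<Sum>x\<in>?S. A2 (sw u v x) u v)"
        by (rule sum_sw_slice[symmetric]) (use uv in auto)
      also have "\<dots> = (\<Sum>x\<in>?S. A3 x u v)"
        by (intro sum.cong refl) (simp add: A2_def A3_def)
      finally show "(\<Sum>x\<in>?S. A2 x u v) = (\<Sum>x\<in>?S. A3 x u v)" .
    qed
    also have "\<dots> = (\<Sum>x\<in>?S. \<Sum>u\<in>?N. \<Sum>v\<in>?N. A3 x u v)"
      by (simp add: sum.swap[of _ ?S] sum.swap[of _ "{1..n}" ?S])
    finally show ?thesis using s3 by simp
  qed
  have s4: "(\<Sum>x\<in>?S. \<Sum>u\<in>?N. \<Sum>v\<in>?N. A4 x u v) = real r * Dcnt n r f"
  proof -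
    have "(\<Sum>x\<in>?S. \<Sum>u\<in>?N. \<Sum>v\<in>?N. A4 x u v) = (\<Sum>u\<in>?N. \<Sum>v\<in>?N. \<Sum>x\<in>?S. A4 x u v)"
      by (simp add: sum.swap[of _ ?S] sum.swap[of _ "{1..n}" ?S])
    also have "\<dots> = (\<Sum>u\<in>?N. \<Sum>v\<in>?N. \<Sum>x\<in>?S. A1 x u v)"
    proof (rule sum.cong[OF refl], rule sum.cong[OF refl])
      fix u v assume uv: "u \<in> ?N" "v \<in> ?N"
      have "(\<Sum>x\<in>?S. A4 x u v) = (\<Sum>x\<in>?S. A4 (sw u v x) u v)"
        by (rule sum_sw_slice[symmetric]) (use uv in auto)
      also have "\<dots> = (\<Sum>x\<in>?S. A1 x u v)"
        by (intro sum.cong refl) (simp add: A4_def A1_def)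
      finally show "(\<Sum>x\<in>?S. A4 x u v) = (\<Sum>x\<in>?S. A1 x u v)" .
    qed
    also have "\<dots> = (\<Sum>x\<in>?S. \<Sum>u\<in>?N. \<Sum>v\<in>?N. A1 x u v)"
      by (simp add: sum.swap[of _ ?S] sum.swap[of _ "{1..n}" ?S])
    finally show ?thesis using s1 by simp
  qed
  have "(\<Sum>x\<in>?S. Lop ?N f x * f x) = (\<Sum>x\<in>?S. \<Sum>u\<in>?N. \<Sum>v\<in>?N. 2 * I x u v)"
    unfolding Lop_def sum_distrib_right using termeq by (intro sum.cong refl) auto
  also have "\<dots> \<le> (\<Sum>x\<in>?S. \<Sum>u\<in>?N. \<Sum>v\<in>?N. 2 * (A1 x u v + A2 x u v + A3 x u v + A4 x u v))"
  proof (intro sum_mono)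
    fix x u v
    show "2 * I x u v \<le> 2 * (A1 x u v + A2 x u v + A3 x u v + A4 x u v)" by (rule mult_left_mono[OF Ile]) simp
  qed
  also have "\<dots> = 2 * ((\<Sum>x\<in>?S. \<Sum>u\<in>?N. \<Sum>v\<in>?N. A1 x u v) + (\<Sum>x\<in>?S. \<Sum>u\<in>?N. \<Sum>v\<in>?N. A2 x u v)
       + (\<Sum>x\<in>?S. \<Sum>u\<in>?N. \<Sum>v\<in>?N. A3 x u v) + (\<Sum>x\<in>?S. \<Sum>u\<in>?N. \<Sum>v\<in>?N. A4 x u v))"
    by (simp add: sum.distrib sum_distrib_left)
  also have "\<dots> = 8 * real r * Dcnt n r f" unfolding s1 s2 s3 s4 by simp
  finally show ?thesis .
qed


lemma double_count:
  assumes "r < n"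
  shows "(\<Sum>x\<in>slice n r. \<Sum>u\<in>{1..n} - x. F (insert u x)) = real (r+1) * (\<Sum>y\<in>slice n (r+1). F y)"
proof -
  have L: "(\<Sum>x\<in>slice n r. \<Sum>u\<in>{1..n} - x. F (insert u x)) = (\<Sum>(x,u)\<in>(SIGMA x:slice n r. {1..n} - x). F (insert u x))"
    by (rule sum.Sigma) (auto simp: finite_slice)
  have R: "(\<Sum>y\<in>slice n (r+1). \<Sum>u\<in>y. F y) = (\<Sum>(y,u)\<in>(SIGMA y:slice n (r+1). y). F y)"
    by (rule sum.Sigma) (auto simp: finite_slice slice_def intro: finite_subset)
  have R2: "(\<Sum>y\<in>slice n (r+1). \<Sum>u\<in>y. F y) = real (r+1) * (\<Sum>y\<in>slice n (r+1). F y)"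
    by (simp add: sum_distrib_left slice_def)
  have M: "(\<Sum>(x,u)\<in>(SIGMA x:slice n r. {1..n} - x). F (insert u x)) = (\<Sum>(y,u)\<in>(SIGMA y:slice n (r+1). y). F y)"
  proof (rule sum.reindex_bij_witness[where j="\<lambda>(x,u). (insert u x, u)" and i="\<lambda>(y,u). (y - {u}, u)"])
    fix a assume a: "a \<in> (SIGMA x:slice n r. {1..n} - x)"
    then obtain x u where xu: "a = (x,u)" "x \<in> slice n r" "u \<in> {1..n} - x" by auto
    have fx: "finite x" using xu by (auto simp: slice_def intro: finite_subset)
    show "(case case a of (x, u) \<Rightarrow> (insert u x, u) of (y, u) \<Rightarrow> (y - {u}, u)) = a" using xu by auto
    show "(case a of (x, u) \<Rightarrow> (insert u x, u)) \<in> (SIGMA y:slice n (r+1). y)"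
      using xu fx by (auto simp: slice_def)
    show "(case case a of (x, u) \<Rightarrow> (insert u x, u) of (y, u) \<Rightarrow> F y) = (case a of (x, u) \<Rightarrow> F (insert u x))"
      using xu by auto
  next
    fix b assume b: "b \<in> (SIGMA y:slice n (r+1). y)"
    then obtain y u where yu: "b = (y,u)" "y \<in> slice n (r+1)" "u \<in> y" by auto
    have fy: "finite y" using yu by (auto simp: slice_def intro: finite_subset)
    show "(case case b of (y, u) \<Rightarrow> (y - {u}, u) of (x, u) \<Rightarrow> (insert u x, u)) = b" using yu by auto
    show "(case b of (y, u) \<Rightarrow> (y - {u}, u)) \<in> (SIGMA x:slice n r. {1..n} - x)"
      using yu fy by (auto simp: slice_def)
  qed
  show ?thesis using L R R2 M by simp
qed

lemma card_compl_slice: "x \<in> slice n r \<Longrightarrow> card ({1..n} - x) = n - r"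
proof -
  assume x: "x \<in> slice n r"
  then have "finite x" "x \<subseteq> {1..n}" by (auto simp: slice_def intro: finite_subset)
  then show ?thesis using x by (simp add: card_Diff_subset slice_def)
qed

lemma card_slice_rel:
  assumes "r < n"
  shows "real (card (slice n r)) * real (n - r) = real (card (slice n (r+1))) * real (r+1)"
proof -
  have "(\<Sum>x\<in>slice n r. \<Sum>u\<in>{1..n} - x. (1::real)) = real (card (slice n r)) * real (n - r)"
  proof -
    have "card ({1..n} - x) = n - r" if "x \<in> slice n r" for x
      using that by (rule card_compl_slice)
    then show ?thesis by simp
  qed
  moreover have "(\<Sum>x\<in>slice n r. \<Sum>u\<in>{1..n} - x. (\<lambda>_. 1::real) (insert u x)) = real (r+1) * (\<Sum>y\<in>slice n (r+1). (1::real))"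
    by (rule double_count[OF assms])
  ultimately show ?thesis by simp
qed

lemma alg_pr:
  fixes a b c q s0 s1 :: real
  assumes "a > 0" "b > 0" "c > 0" "q > 0" "a * c = b * q"
  shows "(q * s1 - c * s0) / (a * c) = s1 / b - s0 / a"
proof -
  have "(q * s1 - c * s0) / (a * c) = q * s1 / (a * c) - c * s0 / (a * c)" by (rule diff_divide_distrib)
  also have "q * s1 / (a * c) = s1 / b" unfolding assms(5) using assms by simp
  also have "c * s0 / (a * c) = s0 / a" using assms(1,3) by simp
  finally show ?thesis .
qed

definition mu :: "nat \<Rightarrow> nat \<Rightarrow> (nat set \<Rightarrow> real) \<Rightarrow> real" where
  "mu n r G = (\<Sum>x\<in>slice n r. G x) / real (card (slice n r))"

definition pr :: "nat \<Rightarrow> nat \<Rightarrow> (nat set \<Rightarrow> real) \<Rightarrow> real" where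
  "pr n r f = Dcnt n r f / (real (card (slice n r)) * real (n - r))"

lemma pr_nonneg: "pr n r f \<ge> 0"
  by (simp add: pr_def Dcnt_def bad_def sum_nonneg)

lemma pr_mono:
  assumes "r < n" "monotone_bool n G"
  shows "pr n r (\<lambda>x. real (G x)) = mu n (r+1) (\<lambda>x. real (G x)) - mu n r (\<lambda>x. real (G x))"
proof -
  let ?G = "\<lambda>x. real (G x)"
  have b: "bad ?G x u = ?G (insert u x) - ?G x" if "x \<in> slice n r" "u \<in> {1..n} - x" for x u
  proof -
    have c: "x \<in> cube n" "insert u x \<in> cube n" using that by (auto simp: slice_def cube_def)
    then have "G x \<in> {0,1}" "G (insert u x) \<in> {0,1}" "G x \<le> G (insert u x)"
      using assms(2) by (auto simp: monotone_bool_def)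
    then show ?thesis by (auto simp: bad_def)
  qed
  have "Dcnt n r ?G = (\<Sum>x\<in>slice n r. \<Sum>u\<in>{1..n} - x. ?G (insert u x)) - (\<Sum>x\<in>slice n r. \<Sum>u\<in>{1..n} - x. ?G x)"
    unfolding Dcnt_def sum_subtractf[symmetric]
    by (rule sum.cong[OF refl], rule sum.cong[OF refl]) (simp add: b)
  also have "(\<Sum>x\<in>slice n r. \<Sum>u\<in>{1..n} - x. ?G x) = real (n - r) * (\<Sum>x\<in>slice n r. ?G x)"
  proof -
    have "card ({1..n} - x) = n - r" if "x \<in> slice n r" for x
      using that by (rule card_compl_slice)
    then show ?thesis by (simp add: sum_distrib_left)
  qed
  also have "(\<Sum>x\<in>slice n r. \<Sum>u\<in>{1..n} - x. ?G (insert u x)) = real (r+1) * (\<Sum>y\<in>slice n (r+1). ?G y)"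
    by (rule double_count[OF assms(1)])
  finally have D: "Dcnt n r ?G = real (r+1) * (\<Sum>y\<in>slice n (r+1). ?G y) - real (n - r) * (\<Sum>x\<in>slice n r. ?G x)" .
  have pos1: "real (card (slice n r)) > 0" using card_slice_pos[of r n] assms by simp
  have pos2: "real (card (slice n (r+1))) > 0" using card_slice_pos[of "r+1" n] assms by simp
  have nr: "real (n - r) > 0" using assms by simp
  show ?thesis
    unfolding pr_def mu_def D
    by (rule alg_pr) (use card_slice_rel[OF assms(1)] pos1 pos2 nr in auto)
qed

lemma mu_bounds:
  assumes "monotone_bool n G" "r \<le> n"
  shows "mu n r (\<lambda>x. real (G x)) \<ge> 0" "mu n r (\<lambda>x. real (G x)) \<le> 1"
proof -
  have g: "real (G x) \<le> 1" if "x \<in> slice n r" for x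
  proof -
    have "x \<in> cube n" using that by (auto simp: slice_def cube_def)
    then show ?thesis using assms(1) by (auto simp: monotone_bool_def)
  qed
  have pos: "real (card (slice n r)) > 0" using card_slice_pos[OF assms(2)] by simp
  show "mu n r (\<lambda>x. real (G x)) \<ge> 0" by (simp add: mu_def sum_nonneg)
  have "(\<Sum>x\<in>slice n r. real (G x)) \<le> (\<Sum>x\<in>slice n r. 1)" using g by (intro sum_mono) auto
  then show "mu n r (\<lambda>x. real (G x)) \<le> 1" using pos by (simp add: mu_def divide_le_eq_1)
qed

lemma sum_pr_mono:
  assumes "monotone_bool n G"
  shows "(\<Sum>r<n. pr n r (\<lambda>x. real (G x))) \<le> 1"
proof -
  have "(\<Sum>r<n. pr n r (\<lambda>x. real (G x))) = (\<Sum>r<n. mu n (Suc r) (\<lambda>x. real (G x)) - mu n r (\<lambda>x. real (G x)))"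
    using pr_mono[OF _ assms] by (intro sum.cong) auto
  also have "\<dots> = mu n n (\<lambda>x. real (G x)) - mu n 0 (\<lambda>x. real (G x))"
    by (rule sum_lessThan_telescope)
  also have "\<dots> \<le> 1" using mu_bounds[OF assms, of n] mu_bounds[OF assms, of 0] by simp
  finally show ?thesis .
qed

lemma sum_pr_kmono:
  assumes "k_monotone_pm n k f"
  shows "(\<Sum>r<n. pr n r f) \<le> real k"
proof -
  obtain g where g: "k_monotone_bool n k g" "\<forall>x\<in>cube n. real (g x) = (1 - f x) / 2"
    using assms by (auto simp: k_monotone_pm_def)
  obtain G where G: "\<forall>i<k. monotone_bool n (G i)" "\<forall>x\<in>cube n. g x = (\<Sum>i<k. G i x) mod 2"
    using g(1) by (auto simp: k_monotone_bool_def)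
  have badle: "bad f x u \<le> (\<Sum>i<k. bad (\<lambda>y. real (G i y)) x u)" if "x \<in> slice n r" "u \<in> {1..n} - x" for x u r
  proof (cases "f x = f (insert u x)")
    case True then show ?thesis by (simp add: bad_def sum_nonneg)
  next
    case False
    have c: "x \<in> cube n" "insert u x \<in> cube n" using that by (auto simp: slice_def cube_def)
    have "\<exists>i<k. G i x \<noteq> G i (insert u x)"
    proof (rule ccontr)
      assume "\<not> ?thesis"
      then have "(\<Sum>i<k. G i x) = (\<Sum>i<k. G i (insert u x))" by (intro sum.cong) auto
      then have "g x = g (insert u x)" using G(2) c by simp
      then have "real (g x) = real (g (insert u x))" by simp
      then have "f x = f (insert u x)" using g(2) c by simp
      then show False using False by simp
    qed
    then obtain i where i: "i < k" "G i x \<noteq> G i (insert u x)" by auto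
    have "bad (\<lambda>y. real (G i y)) x u = 1" using i by (simp add: bad_def)
    moreover have "bad (\<lambda>y. real (G i y)) x u \<le> (\<Sum>i<k. bad (\<lambda>y. real (G i y)) x u)"
      by (rule member_le_sum) (use i in \<open>auto simp: bad_def\<close>)
    ultimately show ?thesis using False by (simp add: bad_def)
  qed
  have prle: "pr n r f \<le> (\<Sum>i<k. pr n r (\<lambda>y. real (G i y)))" for r
  proof -
    have "Dcnt n r f \<le> (\<Sum>i<k. Dcnt n r (\<lambda>y. real (G i y)))"
    proof -
      have "Dcnt n r f \<le> (\<Sum>x\<in>slice n r. \<Sum>u\<in>{1..n} - x. \<Sum>i<k. bad (\<lambda>y. real (G i y)) x u)"
        unfolding Dcnt_def using badle by (intro sum_mono) auto
      also have "\<dots> = (\<Sum>i<k. Dcnt n r (\<lambda>y. real (G i y)))"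
        unfolding Dcnt_def by (simp add: sum.swap[of _ "{..<k}"])
      finally show ?thesis .
    qed
    moreover have "real (card (slice n r)) * real (n - r) \<ge> 0" by simp
    ultimately show ?thesis unfolding pr_def by (simp add: sum_divide_distrib[symmetric] divide_right_mono)
  qed
  have "(\<Sum>r<n. pr n r f) \<le> (\<Sum>r<n. \<Sum>i<k. pr n r (\<lambda>y. real (G i y)))"
    using prle by (intro sum_mono) auto
  also have "\<dots> = (\<Sum>i<k. \<Sum>r<n. pr n r (\<lambda>y. real (G i y)))" by (rule sum.swap)
  also have "\<dots> \<le> (\<Sum>i<k. 1)" using sum_pr_mono G(1) by (intro sum_mono) auto
  finally show ?thesis by simp
qed


lemma nat_ineq:
  fixes n r :: nat
  assumes "r \<le> n"
  shows "2 * r * (n - r) \<le> n * (n + 1 - min r (n - r))"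
proof (cases "r \<le> n - r")
  case True
  then have m: "min r (n - r) = r" by simp
  have "2 * r * (n - r) \<le> n * (n - r)" using True assms by (intro mult_le_mono1) linarith
  also have "\<dots> \<le> n * (n + 1 - r)" by (intro mult_le_mono2) linarith
  finally show ?thesis using m by simp
next
  case False
  then have m: "min r (n - r) = n - r" by simp
  have "2 * r * (n - r) = (2 * (n - r)) * r" by simp
  also have "\<dots> \<le> n * r" using False assms by (intro mult_le_mono1) linarith
  also have "\<dots> \<le> n * (n + 1 - (n - r))" using assms by (intro mult_le_mono2) linarith
  finally show ?thesis using m by simp
qed

lemma slice_weight_final:
  assumes pm: "\<forall>x\<in>cube n. f x \<in> {-1,1}" and r: "r < n"
  shows "weight_gt n r f d \<le> 2 * real n * pr n r f / (real d + 1)"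
proof -
  define m where "m = min r (n - r)"
  define K where "K = real (card (slice n r))"
  define Lam where "Lam = 2 * (real d + 1) * (real n + 1 - real m)"
  define P where "P = pr n r f"
  define E where "E = (\<Sum>x\<in>slice n r. Lop {1..n} f x * f x)"
  have K: "K > 0" using card_slice_pos[of r n] r by (simp add: K_def)
  have mn: "m \<le> n" by (simp add: m_def)
  have Lam: "Lam > 0" using mn by (simp add: Lam_def)
  have Y: "real (n - r) > 0" using r by simp
  have P0: "P \<ge> 0" by (simp add: P_def pr_nonneg)
  have D: "Dcnt n r f = P * K * real (n - r)"
    using K Y by (simp add: P_def pr_def K_def)
  have W1: "weight_gt n r f d \<le> E / (K * Lam)"
    using weight_bound[of r n f d] r by (simp add: E_def K_def Lam_def m_def)
  have E: "E \<le> 8 * real r * (P * K * real (n - r))"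
    using edge_bound[OF pm, of r] D by (simp add: E_def)
  have "E / (K * Lam) \<le> 8 * real r * (P * K * real (n - r)) / (K * Lam)"
    by (rule divide_right_mono[OF E]) (use K Lam in simp)
  also have "\<dots> = (8 * real r * real (n - r) / Lam) * P"
    using K by (simp add: field_simps)
  also have "\<dots> \<le> (2 * real n / (real d + 1)) * P"
  proof (rule mult_right_mono[OF _ P0])
    have ni: "real (2 * r * (n - r)) \<le> real (n * (n + 1 - m))"
      using nat_ineq[of r n] r by (simp only: m_def of_nat_le_iff)
    then have ni': "2 * real r * real (n - r) \<le> real n * (real n + 1 - real m)"
      using mn by (simp add: of_nat_diff add.commute)
    have "8 * real r * real (n - r) * (real d + 1) \<le> 2 * real n * Lam"
    proof -
      have "8 * real r * real (n - r) * (real d + 1) = 4 * (real d + 1) * (2 * real r * real (n - r))" by simp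
      also have "\<dots> \<le> 4 * (real d + 1) * (real n * (real n + 1 - real m))"
        by (rule mult_left_mono[OF ni']) simp
      also have "\<dots> = 2 * real n * Lam" by (simp add: Lam_def)
      finally show ?thesis .
    qed
    then show "8 * real r * real (n - r) / Lam \<le> 2 * real n / (real d + 1)"
      using Lam by (simp add: divide_simps mult.commute mult.left_commute)
  qed
  finally show ?thesis using W1 by (simp add: P_def)
qed

theorem lemma1:
  fixes n k t d :: nat and f :: "nat set \<Rightarrow> real" and \<epsilon> :: real
  assumes "k_monotone_pm n k f"
    and "1 < t" and "t \<le> n"
    and "1 \<le> d" and "\<epsilon> > 0"
    and "real d * \<epsilon> \<ge> 2 * real k * real n / real t"
  shows "concentrated n f t d \<epsilon>"
proof -
  have pm: "\<forall>x\<in>cube n. f x \<in> {-1,1}" using assms(1) by (simp add: k_monotone_pm_def)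
  define a where "a = (n - t + 1) div 2"
  define Wd where "Wd = {a..<a+t}"
  have Wn: "Wd \<subseteq> {..<n}" using assms(2,3) by (auto simp: Wd_def a_def)
  have cW: "card Wd = t" by (simp add: Wd_def)
  have sumW: "(\<Sum>r\<in>Wd. pr n r f) \<le> real k"
  proof -
    have "(\<Sum>r\<in>Wd. pr n r f) \<le> (\<Sum>r<n. pr n r f)"
      by (rule sum_mono2) (use Wn pr_nonneg in auto)
    then show ?thesis using sum_pr_kmono[OF assms(1)] by simp
  qed
  have tpos: "real t > 0" using assms(2) by simp
  obtain r where rW: "r \<in> Wd" and rp: "real t * pr n r f \<le> real k"
  proof (rule ccontr)
    assume nt: "\<not> thesis"
    have h: "\<forall>r\<in>Wd. real k / real t < pr n r f"
    proof
      fix r assume "r \<in> Wd"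
      then have "\<not> real t * pr n r f \<le> real k" using that nt by blast
      then have "real k < pr n r f * real t" by (simp add: mult.commute)
      then show "real k / real t < pr n r f" using tpos by (simp add: pos_divide_less_eq)
    qed
    have "Wd \<noteq> {}" using cW assms(2) by auto
    then have "(\<Sum>r\<in>Wd. real k / real t) < (\<Sum>r\<in>Wd. pr n r f)"
      using h by (intro sum_strict_mono) (auto simp: Wd_def)
    then have "real k < (\<Sum>r\<in>Wd. pr n r f)" using cW tpos by simp
    then show False using sumW by simp
  qed
  have rn: "r < n" using rW Wn by auto
  have bnd: "weight_gt n r f d \<le> 2 * real n * pr n r f / (real d + 1)"
    by (rule slice_weight_final[OF pm rn])
  have lt: "2 * real n * pr n r f / (real d + 1) < \<epsilon>"
  proof (cases "k = 0")
    case True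
    then have "pr n r f \<le> 0" using rp tpos by (simp add: mult_le_0_iff)
    then have "pr n r f = 0" using pr_nonneg[of n r f] by simp
    then show ?thesis using assms(5) by simp
  next
    case False
    have P: "pr n r f \<le> real k / real t" using rp tpos by (simp add: pos_le_divide_eq mult.commute)
    define c where "c = 2 * real n * (real k / real t)"
    have cpos: "c > 0" using False tpos assms(2,3) by (simp add: c_def)
    have dpos: "real d > 0" using assms(4) by simp
    have "2 * real n * pr n r f / (real d + 1) \<le> c / (real d + 1)"
    proof (rule divide_right_mono)
      show "2 * real n * pr n r f \<le> c" unfolding c_def by (rule mult_left_mono[OF P]) simp
    qed simp
    also have "\<dots> < c / real d" using cpos dpos by (simp add: divide_strict_left_mono)
    also have "\<dots> \<le> \<epsilon>"
    proof -
      have "c = 2 * real k * real n / real t" by (simp add: c_def)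
      then have "c \<le> real d * \<epsilon>" using assms(6) by simp
      then show ?thesis using dpos by (simp add: pos_divide_le_eq mult.commute)
    qed
    finally show ?thesis .
  qed
  have rb: "real n / 2 - real t / 2 \<le> real r" "real r \<le> real n / 2 + real t / 2"
  proof -
    have "a \<le> r" "r < a + t" using rW by (auto simp: Wd_def)
    moreover have "real n - real t \<le> 2 * real a" "2 * real a \<le> real n - real t + 1"
      using assms(3) by (simp_all add: a_def; linarith)+
    ultimately show "real n / 2 - real t / 2 \<le> real r" "real r \<le> real n / 2 + real t / 2" by linarith+
  qed
  show ?thesis unfolding concentrated_def
    by (rule exI[of _ "int r"]) (use rb rn bnd lt in auto)
qed

end
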